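(* Let $\rho\in\mathbb S^m(\mathbb R^n;\mathscr A_\theta)$, $m\in\mathbb R$. For every $s\in\mathbb R$, the operator $P_\rho$ extends uniquely to a continuous linear map $P_\rho:\mathcal H^{(s+m)}_\theta\to\mathcal H^{(s)}_\theta$. Moreover, $\rho\mapsto P_\rho$ is a continuous linear map from $\mathbb S^m(\mathbb R^n;\mathscr A_\theta)$ to $\mathscr L(\mathcal H^{(s+m)}_\theta,\mathcal H^{(s)}_\theta)$ (bounded operators with the operator norm topology).
   Context: Fix $n\ge 2$ and a real antisymmetric $n\times n$ matrix $\theta$. The noncommutative torus $A_\theta$ is the $C^*$-algebra generated by unitaries $U_1,\dots,U_n$ with $U_kU_j=e^{2i\pi\theta_{jk}}U_jU_k$; $U^k=U_1^{k_1}\cdots U_n^{k_n}$; $\|\cdot\|$ is the $C^*$-norm; $\tau$ is the continuous trace with $\tau(U^0)=1$, $\tau(U^k)=0$ for $k\ne0$. $\mathbb R^n$ acts by $*$-automorphisms $\alpha_s$ with $\alpha_s(U^k)=e^{is\cdot k}U^k$. $\mathscr A_\theta$ is the set of $u\in A_\theta$ with $s\mapsto\alpha_s(u)$ smooth, equivalently the sums $\sum u_kU^k$ with $(u_k)$ rapidly decreasing; $\delta_j(u)=-i\,\partial_{s_j}\alpha_s(u)|_{s=0}$, $\delta^\alpha=\delta_1^{\alpha_1}\cdots\delta_n^{\alpha_n}$; it is a Fréchet algebra for the seminorms $u\mapsto\|\delta^\alpha u\|$. $\mathscr A_\theta'$ is the strong dual of $\mathscr A_\theta$, containing $\mathscr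 A_\theta$ via $\langle u,v\rangle=\tau(uv)$; $u\in\mathscr A_\theta'$ has Fourier coefficients $u_k=\langle u,(U^k)^*\rangle$. $\mathcal H^{(s)}_\theta=\{u\in\mathscr A_\theta':\sum_k(1+|k|^2)^s|u_k|^2<\infty\}$ with norm $\|u\|_s=\big(\sum_k(1+|k|^2)^s|u_k|^2\big)^{1/2}$; $\mathscr A_\theta$ is dense in it. $\mathbb S^m(\mathbb R^n;\mathscr A_\theta)$ is the space of smooth $\rho:\mathbb R^n\to\mathscr A_\theta$ with $\|\delta^\alpha\partial_\xi^\beta\rho(\xi)\|\le C_{\alpha\beta}(1+|\xi|)^{m-|\beta|}$, Fréchet for the seminorms $p^{(m)}_N(\rho)=\sup_{|\alpha|+|\beta|\le N}\sup_\xi(1+|\xi|)^{-m+|\beta|}\|\delta^\alpha\partial_\xi^\beta\rho(\xi)\|$. $P_\rho:\mathscr A_\theta\to\mathscr A_\theta$ is the pseudodifferential operator $P_\rho u=\iint e^{is\cdot\xi}\rho(\xi)\alpha_{-s}(u)\,ds\,(2\pi)^{-n}d\xi$ (oscillating integral); concretely $P_\rho\big(\sum_ku_kU^k\big)=\sum_ku_k\rho(k)U^k$. *)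

theory Defs
  imports "HOL-Analysis.Analysis"
begin

text \<open>Concrete model of the smooth noncommutative torus.  The dimension n is the
cardinality of the finite, linearly ordered index type 'n.  An element
u = sum_k u_k U^k is represented by its Fourier coefficient function
int^'n => complex (u_k = tau(u (U^k)^*)).\<close>

type_synonym 'n coeff = "int ^ 'n \<Rightarrow> complex"

definition ivec :: "int ^ ('n::{finite,linorder}) \<Rightarrow> real ^ ('n::{finite,linorder})" where
  "ivec k = (\<chi> i. real_of_int (k $ i))"

definition knorm :: "int ^ ('n::{finite,linorder}) \<Rightarrow> real" where
  "knorm k = norm (ivec k)"

definition antisym_mat :: "real ^ ('n::{finite,linorder}) ^ ('n::{finite,linorder}) \<Rightarrow> bool" where
  "antisym_mat \<theta> \<longleftrightarrow> (\<forall>i j. \<theta> $ i $ j = - (\<theta> $ j $ i))"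

text \<open>Phase: U^k U^l = phase k l * U^(k+l), where U^k = U_1^k_1 ... U_n^k_n and
U_i U_j = exp(2 pi i theta_ji) U_j U_i.\<close>
definition phase :: "real ^ ('n::{finite,linorder}) ^ ('n::{finite,linorder}) \<Rightarrow> int ^ ('n::{finite,linorder}) \<Rightarrow> int ^ ('n::{finite,linorder}) \<Rightarrow> complex" where
  "phase \<theta> k l = cis (2 * pi * (\<Sum>(j,i) \<in> {(j,i). j < i}.
        \<theta> $ j $ i * real_of_int (k $ i) * real_of_int (l $ j)))"

text \<open>Product in A_theta on coefficients (twisted convolution).\<close>
definition tprod :: "real ^ ('n::{finite,linorder}) ^ ('n::{finite,linorder}) \<Rightarrow> ('n::{finite,linorder}) coeff \<Rightarrow> ('n::{finite,linorder}) coeff \<Rightarrow> ('n::{finite,linorder}) coeff" where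
  "tprod \<theta> u v = (\<lambda>p. infsum (\<lambda>k. u k * v (p - k) * phase \<theta> k (p - k)) UNIV)"

definition l2norm :: "('n::{finite,linorder}) coeff \<Rightarrow> real" where
  "l2norm \<xi> = sqrt (infsum (\<lambda>k. (norm (\<xi> k))\<^sup>2) UNIV)"

text \<open>C*-norm, computed in the GNS representation of the faithful trace tau
(left regular representation on l^2(Z^n) = L^2(A_theta, tau)).\<close>
definition cnorm :: "real ^ ('n::{finite,linorder}) ^ ('n::{finite,linorder}) \<Rightarrow> ('n::{finite,linorder}) coeff \<Rightarrow> real" where
  "cnorm \<theta> u = (SUP \<xi> \<in> {\<xi>. finite {k. \<xi> k \<noteq> 0} \<and> l2norm \<xi> \<le> 1}. l2norm (tprod \<theta> u \<xi>))"

text \<open>Smooth elements: rapidly decreasing coefficient families.\<close>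
definition Asm :: "('n::{finite,linorder}) coeff set" where
  "Asm = {u. \<forall>N::nat. \<exists>C. \<forall>k. norm (u k) * (1 + knorm k) ^ N \<le> C}"

text \<open>delta^alpha, with delta_j(U^k) = k_j U^k.\<close>
definition delta :: "nat ^ ('n::{finite,linorder}) \<Rightarrow> ('n::{finite,linorder}) coeff \<Rightarrow> ('n::{finite,linorder}) coeff" where
  "delta \<alpha> u = (\<lambda>k. (\<Prod>i\<in>UNIV. (of_int (k $ i)) ^ (\<alpha> $ i)) * u k)"

definition mlen :: "nat ^ ('n::{finite,linorder}) \<Rightarrow> nat" where
  "mlen \<alpha> = (\<Sum>i\<in>UNIV. \<alpha> $ i)"

text \<open>D is the family of all iterated partial derivatives (D beta = partial_xi^beta rho),
taken in the Frechet topology of the smooth algebra (seminorms u -> norm(delta^alpha u)).\<close>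
definition smooth_family ::
  "real ^ ('n::{finite,linorder}) ^ ('n::{finite,linorder}) \<Rightarrow> (real ^ ('n::{finite,linorder}) \<Rightarrow> ('n::{finite,linorder}) coeff) \<Rightarrow> (nat ^ ('n::{finite,linorder}) \<Rightarrow> real ^ ('n::{finite,linorder}) \<Rightarrow> ('n::{finite,linorder}) coeff) \<Rightarrow> bool" where
  "smooth_family \<theta> \<rho> D \<longleftrightarrow>
     D 0 = \<rho> \<and>
     (\<forall>\<beta> \<xi>. D \<beta> \<xi> \<in> Asm) \<and>
     (\<forall>\<beta> \<xi> \<alpha>. ((\<lambda>\<eta>. cnorm \<theta> (delta \<alpha> (\<lambda>k. D \<beta> \<eta> k - D \<beta> \<xi> k))) \<longlongrightarrow> 0) (at \<xi>)) \<and>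
     (\<forall>\<beta> \<xi> \<alpha> j. ((\<lambda>h. cnorm \<theta> (delta \<alpha>
          (\<lambda>k. (D \<beta> (\<xi> + h *\<^sub>R axis j 1) k - D \<beta> \<xi> k) / complex_of_real h
                 - D (\<beta> + axis j 1) \<xi> k))) \<longlongrightarrow> 0) (at 0))"

definition symbol_class :: "real ^ ('n::{finite,linorder}) ^ ('n::{finite,linorder}) \<Rightarrow> real \<Rightarrow> (real ^ ('n::{finite,linorder}) \<Rightarrow> ('n::{finite,linorder}) coeff) set" where
  "symbol_class \<theta> m = {\<rho>. \<exists>D. smooth_family \<theta> \<rho> D \<and>
     (\<forall>\<alpha> \<beta>. \<exists>C. \<forall>\<xi>. cnorm \<theta> (delta \<alpha> (D \<beta> \<xi>)) \<le> C * (1 + norm \<xi>) powr (m - real (mlen \<beta>)))}"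

definition symD :: "real ^ ('n::{finite,linorder}) ^ ('n::{finite,linorder}) \<Rightarrow> (real ^ ('n::{finite,linorder}) \<Rightarrow> ('n::{finite,linorder}) coeff) \<Rightarrow> nat ^ ('n::{finite,linorder}) \<Rightarrow> real ^ ('n::{finite,linorder}) \<Rightarrow> ('n::{finite,linorder}) coeff" where
  "symD \<theta> \<rho> = (SOME D. smooth_family \<theta> \<rho> D)"

definition symb_seminorm :: "real ^ ('n::{finite,linorder}) ^ ('n::{finite,linorder}) \<Rightarrow> real \<Rightarrow> nat \<Rightarrow> (real ^ ('n::{finite,linorder}) \<Rightarrow> ('n::{finite,linorder}) coeff) \<Rightarrow> real" where
  "symb_seminorm \<theta> m N \<rho> =
     (SUP (\<alpha>, \<beta>, \<xi>) \<in> {(\<alpha>, \<beta>, \<xi>). mlen \<alpha> + mlen \<beta> \<le> N}.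
        (1 + norm \<xi>) powr (real (mlen \<beta>) - m) * cnorm \<theta> (delta \<alpha> (symD \<theta> \<rho> \<beta> \<xi>)))"

text \<open>P_rho (sum_k u_k U^k) = sum_k u_k rho(k) U^k, with U^k the coefficient family
indicator of k.\<close>
definition Pop :: "real ^ ('n::{finite,linorder}) ^ ('n::{finite,linorder}) \<Rightarrow> (real ^ ('n::{finite,linorder}) \<Rightarrow> ('n::{finite,linorder}) coeff) \<Rightarrow> ('n::{finite,linorder}) coeff \<Rightarrow> ('n::{finite,linorder}) coeff" where
  "Pop \<theta> \<rho> u = (\<lambda>l. infsum (\<lambda>k. u k * tprod \<theta> (\<rho> (ivec k)) (\<lambda>p. if p = k then 1 else 0) l) UNIV)"

text \<open>Sobolev spaces, via Fourier coefficients of distributions.\<close>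
definition sob_weight :: "real \<Rightarrow> ('n::{finite,linorder}) coeff \<Rightarrow> int ^ ('n::{finite,linorder}) \<Rightarrow> real" where
  "sob_weight s u k = (1 + (knorm k)\<^sup>2) powr s * (norm (u k))\<^sup>2"

definition Hsob :: "real \<Rightarrow> ('n::{finite,linorder}) coeff set" where
  "Hsob s = {u. sob_weight s u summable_on UNIV}"

definition sobnorm :: "real \<Rightarrow> ('n::{finite,linorder}) coeff \<Rightarrow> real" where
  "sobnorm s u = sqrt (infsum (sob_weight s u) UNIV)"

definition is_ext :: "real ^ ('n::{finite,linorder}) ^ ('n::{finite,linorder}) \<Rightarrow> (real ^ ('n::{finite,linorder}) \<Rightarrow> ('n::{finite,linorder}) coeff) \<Rightarrow> real \<Rightarrow> real
     \<Rightarrow> (('n::{finite,linorder}) coeff \<Rightarrow> ('n::{finite,linorder}) coeff) \<Rightarrow> bool" where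
  "is_ext \<theta> \<rho> s m T \<longleftrightarrow>
     (\<forall>u \<in> Hsob (s + m). T u \<in> Hsob s) \<and>
     (\<forall>u \<in> Hsob (s + m). \<forall>v \<in> Hsob (s + m). \<forall>a b :: complex.
        T (\<lambda>k. a * u k + b * v k) = (\<lambda>k. a * T u k + b * T v k)) \<and>
     (\<exists>C. \<forall>u \<in> Hsob (s + m). sobnorm s (T u) \<le> C * sobnorm (s + m) u) \<and>
     (\<forall>u \<in> Asm. T u = Pop \<theta> \<rho> u)"

end

theory Submission
  imports Defs "HOL-Library.FuncSet"
begin

lemma nn_bound_summable:
  fixes f :: "'a \<Rightarrow> real"
  assumes "\<And>x. f x \<ge> 0" "\<And>F. finite F \<Longrightarrow> sum f F \<le> B"
  shows "f summable_on UNIV" "infsum f UNIV \<le> B"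
proof -
  show s: "f summable_on UNIV"
    by (rule nonneg_bdd_above_summable_on) (use assms in \<open>auto intro!: bdd_aboveI2\<close>)
  show "infsum f UNIV \<le> B"
    by (rule infsum_le_finite_sums[OF s]) (use assms in auto)
qed

lemma shift_has_sum:
  fixes g :: "'a::ab_group_add \<Rightarrow> 'b::{comm_monoid_add,topological_space}"
  assumes "(g has_sum G) UNIV"
  shows "((\<lambda>k. g (l - k)) has_sum G) UNIV"
proof -
  have inj: "inj (\<lambda>k::'a. l - k)" by (auto intro: injI)
  have im: "(\<lambda>k::'a. l - k) ` UNIV = UNIV"
    by (auto simp: image_iff intro!: exI[of _ "l - _"])
  show ?thesis using has_sum_reindex[OF inj, of g G] assms im by (simp add: o_def)
qed

lemma single_le_infsum:
  fixes f :: "'a \<Rightarrow> real"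
  assumes "f summable_on UNIV" "\<And>x. f x \<ge> 0"
  shows "f x \<le> infsum f UNIV"
  using finite_sum_le_infsum[OF assms(1), of "{x}"] assms(2) by auto

lemma young:
  fixes g v :: "'a::ab_group_add \<Rightarrow> real"
  assumes g0: "\<And>x. g x \<ge> 0" and v0: "\<And>x. v x \<ge> 0"
    and gs: "g summable_on UNIV" and vs: "(\<lambda>x. (v x)\<^sup>2) summable_on UNIV"
  shows "(\<lambda>k. g (l - k) * v k) summable_on UNIV"
    and "(\<lambda>l. (infsum (\<lambda>k. g (l - k) * v k) UNIV)\<^sup>2) summable_on UNIV"
    and "infsum (\<lambda>l. (infsum (\<lambda>k. g (l - k) * v k) UNIV)\<^sup>2) UNIV
           \<le> (infsum g UNIV)\<^sup>2 * infsum (\<lambda>x. (v x)\<^sup>2) UNIV"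
proof -
  define G where "G = infsum g UNIV"
  define V where "V = infsum (\<lambda>x. (v x)\<^sup>2) UNIV"
  have G0: "G \<ge> 0" unfolding G_def using g0 by (simp add: infsum_nonneg)
  have V0: "V \<ge> 0" unfolding V_def by (simp add: infsum_nonneg)
  have gsh: "\<And>l. ((\<lambda>k. g (l - k)) has_sum G) UNIV"
    using shift_has_sum gs G_def by (metis has_sum_infsum)
  have vle: "\<And>x. (v x)\<^sup>2 \<le> V" unfolding V_def
    by (rule single_le_infsum[OF vs]) simp
  have vle': "\<And>x. v x \<le> sqrt V" using vle v0 real_le_rsqrt by blast
  have s1: "\<And>l. (\<lambda>k. g (l - k) * v k) summable_on UNIV"
  proof -
    fix l
    have "(\<lambda>k. g (l - k) * sqrt V) summable_on UNIV"
      using gsh[of l] by (intro summable_on_cmult_left) (auto simp: has_sum_iff)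
    then show "(\<lambda>k. g (l - k) * v k) summable_on UNIV"
      by (rule summable_on_comparison_test) (auto intro!: mult_left_mono vle' g0 v0 mult_nonneg_nonneg)
  qed
  then show "(\<lambda>k. g (l - k) * v k) summable_on UNIV" .
  have s2: "\<And>l. (\<lambda>k. g (l - k) * (v k)\<^sup>2) summable_on UNIV"
  proof -
    fix l
    have "(\<lambda>k. g (l - k) * V) summable_on UNIV"
      using gsh[of l] by (intro summable_on_cmult_left) (auto simp: has_sum_iff)
    then show "(\<lambda>k. g (l - k) * (v k)\<^sup>2) summable_on UNIV"
      by (rule summable_on_comparison_test) (auto intro!: mult_left_mono vle g0 mult_nonneg_nonneg)
  qed
  define S where "S l = infsum (\<lambda>k. g (l - k) * (v k)\<^sup>2) UNIV" for l
  define h where "h l = infsum (\<lambda>k. g (l - k) * v k) UNIV" for l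
  have h0: "h l \<ge> 0" for l unfolding h_def by (intro infsum_nonneg) (auto intro: g0 v0 mult_nonneg_nonneg)
  have hle: "h l \<le> sqrt (G * S l)" for l
    unfolding h_def
  proof (rule infsum_le_finite_sums[OF s1])
    fix F :: "'a set" assume F: "finite F"
    have "(\<Sum>k\<in>F. g (l - k) * v k) = (\<Sum>k\<in>F. sqrt (g (l - k)) * (sqrt (g (l - k)) * v k))"
      by (intro sum.cong) (auto simp: g0 mult.assoc[symmetric])
    also have "\<dots> \<le> sqrt ((\<Sum>k\<in>F. (sqrt (g (l - k)))\<^sup>2) * (\<Sum>k\<in>F. (sqrt (g (l - k)) * v k)\<^sup>2))"
      by (rule real_le_rsqrt, rule Cauchy_Schwarz_ineq_sum)
    also have "\<dots> = sqrt ((\<Sum>k\<in>F. g (l - k)) * (\<Sum>k\<in>F. g (l - k) * (v k)\<^sup>2))"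
      by (simp add: g0 power_mult_distrib)
    also have "\<dots> \<le> sqrt (G * S l)"
    proof -
      have a: "(\<Sum>k\<in>F. g (l - k)) \<le> G"
        using finite_sum_le_has_sum[OF gsh[of l] F] g0 by auto
      have b: "(\<Sum>k\<in>F. g (l - k) * (v k)\<^sup>2) \<le> S l" unfolding S_def
        using finite_sum_le_infsum[OF s2[of l] F] g0 by auto
      show ?thesis
        by (intro real_sqrt_le_mono mult_mono a b) (auto intro!: sum_nonneg g0 G0 mult_nonneg_nonneg)
    qed
    finally show "(\<Sum>k\<in>F. g (l - k) * v k) \<le> sqrt (G * S l)" .
  qed
  have S0: "S l \<ge> 0" for l unfolding S_def by (intro infsum_nonneg) (auto intro: g0 mult_nonneg_nonneg)
  have h2: "(h l)\<^sup>2 \<le> G * S l" for l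
    using hle[of l] h0[of l] G0 S0[of l] by (metis power_mono real_sqrt_pow2 mult_nonneg_nonneg)
  have bound: "(\<Sum>l\<in>L. (h l)\<^sup>2) \<le> G\<^sup>2 * V" if L: "finite L" for L
  proof -
    have sumG: "(\<Sum>l\<in>L. g (l - k)) \<le> G" for k
    proof -
        have inj: "inj_on (\<lambda>l. l - k) L" by (auto intro: inj_onI)
        have "(\<Sum>l\<in>L. g (l - k)) = sum g ((\<lambda>l. l - k) ` L)"
          by (simp add: sum.reindex[OF inj])
        also have "\<dots> \<le> G" unfolding G_def
          using finite_sum_le_infsum[OF gs, of "(\<lambda>l. l - k) ` L"] L g0 by auto
        finally show ?thesis .
    qed
    have "(\<Sum>l\<in>L. (h l)\<^sup>2) \<le> (\<Sum>l\<in>L. G * S l)" by (intro sum_mono h2)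
    also have "\<dots> = G * (\<Sum>l\<in>L. S l)" by (simp add: sum_distrib_left)
    also have "(\<Sum>l\<in>L. S l) = infsum (\<lambda>k. (\<Sum>l\<in>L. g (l - k)) * (v k)\<^sup>2) UNIV"
      using L unfolding S_def
    proof (induction L rule: finite_induct)
      case empty then show ?case by simp
    next
      case (insert a L)
      have "(\<Sum>l\<in>insert a L. S l) = S a + (\<Sum>l\<in>L. S l)" using insert by simp
      also have "\<dots> = infsum (\<lambda>k. g (a - k) * (v k)\<^sup>2) UNIV
          + infsum (\<lambda>k. (\<Sum>l\<in>L. g (l - k)) * (v k)\<^sup>2) UNIV"
        using insert by (simp add: S_def)
      also have "\<dots> = infsum (\<lambda>k. g (a - k) * (v k)\<^sup>2 + (\<Sum>l\<in>L. g (l - k)) * (v k)\<^sup>2) UNIV"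
      proof (rule infsum_add[symmetric, OF s2])
        show "(\<lambda>k. (\<Sum>l\<in>L. g (l - k)) * (v k)\<^sup>2) summable_on UNIV"
          using insert(1)
        proof (induction L rule: finite_induct)
          case empty then show ?case by simp
        next
          case (insert b L)
          then show ?case using summable_on_add[OF s2[of b] insert(3)]
            by (simp add: distrib_right)
        qed
      qed
      also have "\<dots> = infsum (\<lambda>k. (\<Sum>l\<in>insert a L. g (l - k)) * (v k)\<^sup>2) UNIV"
        using insert by (simp add: distrib_right)
      finally show ?case by (simp add: S_def)
    qed
    also have "\<dots> \<le> infsum (\<lambda>k. G * (v k)\<^sup>2) UNIV"
    proof (rule infsum_mono)
      show "(\<lambda>k. (\<Sum>l\<in>L. g (l - k)) * (v k)\<^sup>2) summable_on UNIV"
        by (rule summable_on_comparison_test[of "\<lambda>k. G * (v k)\<^sup>2"])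
           (use vs summable_on_cmult_right in \<open>auto intro!: mult_right_mono sum_nonneg g0 sumG mult_nonneg_nonneg\<close>)
    next
      show "(\<lambda>k. G * (v k)\<^sup>2) summable_on UNIV" using vs by (rule summable_on_cmult_right)
    next
      fix k
      show "(\<Sum>l\<in>L. g (l - k)) * (v k)\<^sup>2 \<le> G * (v k)\<^sup>2"
        by (intro mult_right_mono sumG) auto
    qed
    also have "\<dots> = G * V" unfolding V_def by (rule infsum_cmult_right) (use vs in auto)
    finally show ?thesis using G0 by (simp add: power2_eq_square mult_left_mono mult.assoc)
  qed
  have "(\<lambda>l. (h l)\<^sup>2) summable_on UNIV" "infsum (\<lambda>l. (h l)\<^sup>2) UNIV \<le> G\<^sup>2 * V"
    using nn_bound_summable[of "\<lambda>l. (h l)\<^sup>2" "G\<^sup>2 * V"] bound by auto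
  then show "(\<lambda>l. (infsum (\<lambda>k. g (l - k) * v k) UNIV)\<^sup>2) summable_on UNIV"
    and "infsum (\<lambda>l. (infsum (\<lambda>k. g (l - k) * v k) UNIV)\<^sup>2) UNIV
           \<le> (infsum g UNIV)\<^sup>2 * infsum (\<lambda>x. (v x)\<^sup>2) UNIV"
    unfolding h_def G_def V_def by auto
qed


definition wt :: "int ^ ('n::{finite,linorder}) \<Rightarrow> real" where
  "wt k = 1 + (knorm k)\<^sup>2"

lemma ivec_diff: "ivec (a - b) = ivec a - ivec b"
  by (simp add: ivec_def vec_eq_iff)

lemma ivec_nth: "ivec k $ i = real_of_int (k $ i)"
  by (simp add: ivec_def)

lemma knorm_nonneg: "knorm k \<ge> 0" by (simp add: knorm_def)

lemma knorm_diff_le: "knorm (a - b) \<le> knorm a + knorm b"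
  unfolding knorm_def ivec_diff by (rule norm_triangle_ineq4)

lemma knorm_comp: "\<bar>real_of_int (k $ i)\<bar> \<le> knorm k"
  unfolding knorm_def using component_le_norm_cart[of "ivec k" i] by (simp add: ivec_nth)

lemma knorm_sum: "knorm k \<le> (\<Sum>i\<in>UNIV. \<bar>real_of_int (k $ i)\<bar>)"
  unfolding knorm_def using norm_le_l1_cart[of "ivec k"] by (simp add: ivec_nth)

lemma knorm_minus_comm: "knorm (a - b) = knorm (b - a)"
  unfolding knorm_def ivec_diff by (rule norm_minus_commute)

lemma wt_ge1: "wt k \<ge> 1" by (simp add: wt_def)
lemma wt_pos: "wt k > 0" by (simp add: wt_def add_pos_nonneg)

lemma wt_le_sq: "wt k \<le> (1 + knorm k)\<^sup>2"
  using knorm_nonneg[of k] by (simp add: wt_def power2_eq_square algebra_simps)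

lemma sq_le_wt: "(1 + knorm k)\<^sup>2 \<le> 2 * wt k"
proof -
  have "0 \<le> (knorm k - 1)\<^sup>2" by simp
  then show ?thesis by (simp add: wt_def power2_eq_square algebra_simps)
qed

lemma wt_diff_le: "wt (a - b) \<le> 2 * wt a * wt b"
proof -
  have h: "knorm (a - b) \<le> knorm a + knorm b" by (rule knorm_diff_le)
  have x: "knorm a \<ge> 0" "knorm b \<ge> 0" "knorm (a-b) \<ge> 0" by (auto simp: knorm_nonneg)
  have "(knorm (a - b))\<^sup>2 \<le> (knorm a + knorm b)\<^sup>2" using h x by (intro power_mono) auto
  also have "\<dots> \<le> 2 * (knorm a)\<^sup>2 + 2 * (knorm b)\<^sup>2"
    using sum_squares_bound[of "knorm a" "knorm b"] by (simp add: power2_eq_square algebra_simps)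
  finally have "(knorm (a - b))\<^sup>2 \<le> 2 * (knorm a)\<^sup>2 + 2 * (knorm b)\<^sup>2" .
  moreover have "0 \<le> (knorm a)\<^sup>2 * (knorm b)\<^sup>2" by simp
  moreover have "2 * (1 + (knorm a)\<^sup>2) * (1 + (knorm b)\<^sup>2) = 2 + 2 * (knorm a)\<^sup>2 + 2 * (knorm b)\<^sup>2 + 2 * ((knorm a)\<^sup>2 * (knorm b)\<^sup>2)"
    by (simp add: algebra_simps)
  ultimately show ?thesis unfolding wt_def by linarith
qed

lemma wt_minus: "wt (- k) = wt k"
  using knorm_minus_comm[of 0 k] by (simp add: wt_def)

lemma wt_add_le: "wt (a + b) \<le> 2 * wt a * wt b"
  using wt_diff_le[of a "- b"] by (simp add: wt_minus)

lemma peetre: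
  fixes l k :: "int ^ ('n::{finite,linorder})"
  shows "wt l powr t \<le> 2 powr \<bar>t\<bar> * wt k powr t * wt (l - k) powr \<bar>t\<bar>"
proof (cases "t \<ge> 0")
  case True
  have "wt l \<le> 2 * wt k * wt (l - k)"
    using wt_add_le[of k "l - k"] by (simp add: mult_ac)
  then have "wt l powr t \<le> (2 * wt k * wt (l - k)) powr t"
    using True wt_pos[of l] by (intro powr_mono2) auto
  then show ?thesis using True by (simp add: powr_mult)
next
  case False
  have "wt k \<le> 2 * wt l * wt (l - k)"
    using wt_diff_le[of l "l - k"] by (simp add: mult_ac)
  then have "wt k powr (-t) \<le> (2 * wt l * wt (l - k)) powr (-t)"
    using False wt_pos[of k] by (intro powr_mono2) auto
  then have "wt k powr (-t) \<le> 2 powr (-t) * wt l powr (-t) * wt (l - k) powr (-t)"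
    by (simp add: powr_mult)
  moreover have "wt k powr (-t) = inverse (wt k powr t)" "wt l powr (-t) = inverse (wt l powr t)"
    by (simp_all add: powr_minus)
  moreover have "wt k powr t > 0" "wt l powr t > 0" using wt_pos[of k] wt_pos[of l] by auto
  moreover have "2 powr (-t) > 0" "wt (l - k) powr (-t) > 0" using wt_pos[of "l - k"] by auto
  ultimately have "wt l powr t \<le> 2 powr (-t) * wt k powr t * wt (l - k) powr (-t)"
    by (simp add: field_simps)
  then show ?thesis using False by simp
qed

lemma xi_powr:
  fixes k :: "int ^ ('n::{finite,linorder})"
  shows "(1 + norm (ivec k)) powr m \<le> 2 powr (\<bar>m\<bar>/2) * wt k powr (m/2)"
proof -
  have kn: "norm (ivec k) = knorm k" by (simp add: knorm_def)
  have p1: "1 + knorm k > 0" using knorm_nonneg[of k] by simp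
  have "((1 + knorm k)\<^sup>2) powr (m/2) = ((1 + knorm k) powr 2) powr (m/2)"
    using p1 by (subst powr_numeral) auto
  also have "\<dots> = (1 + knorm k) powr m" by (subst powr_powr) simp
  finally have e: "(1 + knorm k) powr m = ((1 + knorm k)\<^sup>2) powr (m/2)" by simp
  show ?thesis
  proof (cases "m \<ge> 0")
    case True
    have "((1 + knorm k)\<^sup>2) powr (m/2) \<le> (2 * wt k) powr (m/2)"
      using True sq_le_wt[of k] by (intro powr_mono2) auto
    also have "\<dots> = 2 powr (m/2) * wt k powr (m/2)" by (rule powr_mult)
    finally show ?thesis using True kn e by simp
  next
    case False
    have a: "((1 + knorm k)\<^sup>2) powr (m/2) \<le> (wt k) powr (m/2)"
      using False wt_le_sq[of k] wt_pos[of k] by (intro powr_mono2') auto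
    have b: "1 \<le> 2 powr (\<bar>m\<bar>/2)" by (rule ge_one_powr_ge_zero) auto
    have c: "0 \<le> wt k powr (m/2)" by simp
    have "wt k powr (m/2) \<le> 2 powr (\<bar>m\<bar>/2) * wt k powr (m/2)"
      using b c by (simp add: mult_le_cancel_right1)
    then show ?thesis using a e unfolding kn by linarith
  qed
qed


definition tz :: "int \<Rightarrow> real" where "tz z = inverse (1 + (real_of_int z)\<^sup>2)"
definition tn :: "nat \<Rightarrow> real" where "tn n = inverse (1 + (real n)\<^sup>2)"

lemma tn_summable: "summable tn"
proof -
  have "summable (\<lambda>n. inverse (real (Suc n) ^ 2))"
    using inverse_power_summable[of 2, where 'a=real] by (subst summable_Suc_iff) simp
  then have "summable (\<lambda>n. tn (Suc n))"
    by (rule summable_comparison_test'[where N=0]) (auto simp: tn_def intro!: le_imp_inverse_le)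
  then show ?thesis by (subst (asm) summable_Suc_iff)
qed

lemma tn_summable_on: "tn summable_on UNIV"
  using tn_summable by (subst summable_on_UNIV_nonneg_real_iff) (auto simp: tn_def)

definition TS :: real where "TS = infsum tn UNIV"

lemma tn_nonneg: "tn n \<ge> 0" by (simp add: tn_def)
lemma tz_nonneg: "tz n \<ge> 0" by (simp add: tz_def)

lemma tn_sum_le: "finite A \<Longrightarrow> sum tn A \<le> TS"
  unfolding TS_def using finite_sum_le_infsum[OF tn_summable_on] tn_nonneg by auto

lemma tz_sum_le: assumes "finite Z" shows "sum tz Z \<le> 2 * TS"
proof -
  define Zp where "Zp = {z\<in>Z. z \<ge> 0}"
  define Zn where "Zn = {z\<in>Z. z < 0}"
  have Z: "Z = Zp \<union> Zn" "Zp \<inter> Zn = {}" "finite Zp" "finite Zn"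
    using assms by (auto simp: Zp_def Zn_def)
  have "sum tz Zp = sum tn (nat ` Zp)"
  proof -
    have "inj_on nat Zp" by (auto simp: Zp_def inj_on_def)
    then have "sum tn (nat ` Zp) = sum (tn \<circ> nat) Zp" by (rule sum.reindex)
    also have "\<dots> = sum tz Zp" by (intro sum.cong) (auto simp: Zp_def tz_def tn_def)
    finally show ?thesis by simp
  qed
  moreover have "sum tz Zn = sum tn ((\<lambda>z. nat (- z)) ` Zn)"
  proof -
    have "inj_on (\<lambda>z. nat (- z)) Zn" by (auto simp: Zn_def inj_on_def)
    then have "sum tn ((\<lambda>z. nat (- z)) ` Zn) = sum (tn \<circ> (\<lambda>z. nat (- z))) Zn" by (rule sum.reindex)
    also have "\<dots> = sum tz Zn" by (intro sum.cong) (auto simp: Zn_def tz_def tn_def)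
    finally show ?thesis by simp
  qed
  ultimately have "sum tz Z = sum tn (nat ` Zp) + sum tn ((\<lambda>z. nat (- z)) ` Zn)"
    using Z by (simp add: sum.union_disjoint)
  also have "\<dots> \<le> TS + TS" using Z by (intro add_mono tn_sum_le) auto
  finally show ?thesis by simp
qed

lemma prod_tz_bound:
  fixes F :: "(int ^ ('n::{finite,linorder})) set"
  assumes F: "finite F"
  shows "(\<Sum>j\<in>F. \<Prod>i\<in>UNIV. tz (j $ i)) \<le> (2 * TS) ^ CARD('n)"
proof -
  define Z where "Z = (\<Union>i. (\<lambda>j. j $ i) ` F)"
  have Zf: "finite Z" unfolding Z_def using F by (intro finite_UN_I) auto
  define P where "P = PiE (UNIV :: 'n set) (\<lambda>_. Z)"
  have Pf: "finite P" unfolding P_def using Zf by (intro finite_PiE) auto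
  have sub: "F \<subseteq> vec_lambda ` P"
  proof
    fix j assume "j \<in> F"
    then have "vec_nth j \<in> P" by (auto simp: P_def Z_def)
    then show "j \<in> vec_lambda ` P" by (auto intro!: image_eqI[of _ _ "vec_nth j"])
  qed
  have inj: "inj_on vec_lambda P" by (auto intro!: inj_onI simp: vec_lambda_inject)
  have "(\<Sum>j\<in>F. \<Prod>i\<in>UNIV. tz (j $ i)) \<le> (\<Sum>j\<in>vec_lambda ` P. \<Prod>i\<in>UNIV. tz (j $ i))"
    using sub Pf by (intro sum_mono2) (auto intro!: prod_nonneg tz_nonneg)
  also have "\<dots> = (\<Sum>g\<in>P. \<Prod>i\<in>UNIV. tz (g i))"
    by (subst sum.reindex[OF inj]) simp
  also have "\<dots> = (\<Prod>i\<in>(UNIV::'n set). \<Sum>z\<in>Z. tz z)"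
    unfolding P_def by (rule prod_sum_PiE[symmetric]) (auto simp: Zf)
  also have "\<dots> = (\<Sum>z\<in>Z. tz z) ^ CARD('n)" by simp
  also have "\<dots> \<le> (2 * TS) ^ CARD('n)"
    using tz_sum_le[OF Zf] by (intro power_mono) (auto intro: sum_nonneg tz_nonneg)
  finally show ?thesis .
qed

lemma wt_powr_le_prod:
  fixes j :: "int ^ ('n::{finite,linorder})"
  assumes c: "c \<ge> real CARD('n)"
  shows "wt j powr (-c) \<le> (\<Prod>i\<in>UNIV. tz (j $ i))"
proof -
  have "wt j powr (-c) \<le> wt j powr (- real CARD('n))"
    using c wt_ge1[of j] by (intro powr_mono) auto
  also have "\<dots> = inverse (wt j ^ CARD('n))"
    using wt_pos[of j] by (simp add: powr_minus powr_realpow)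
  also have "\<dots> \<le> inverse (\<Prod>i\<in>UNIV. 1 + (real_of_int (j $ i))\<^sup>2)"
  proof (rule le_imp_inverse_le)
    have "(\<Prod>i\<in>(UNIV::'n set). 1 + (real_of_int (j $ i))\<^sup>2) \<le> (\<Prod>i\<in>(UNIV::'n set). wt j)"
    proof (rule prod_mono)
      fix i :: 'n
      have "\<bar>real_of_int (j $ i)\<bar> \<le> knorm j" by (rule knorm_comp)
      then have "(real_of_int (j $ i))\<^sup>2 \<le> (knorm j)\<^sup>2"
        by (metis abs_le_square_iff abs_of_nonneg knorm_nonneg)
      then show "0 \<le> 1 + (real_of_int (j $ i))\<^sup>2 \<and> 1 + (real_of_int (j $ i))\<^sup>2 \<le> wt j"
        by (auto simp: wt_def)
    qed
    then show "(\<Prod>i\<in>UNIV. 1 + (real_of_int (j $ i))\<^sup>2) \<le> wt j ^ CARD('n)" by simp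
    show "0 < (\<Prod>i\<in>UNIV. 1 + (real_of_int (j $ i))\<^sup>2)"
      by (intro prod_pos) (auto intro: add_pos_nonneg)
  qed
  also have "\<dots> = (\<Prod>i\<in>UNIV. tz (j $ i))"
    using prod_inversef[of "\<lambda>i. 1 + (real_of_int (j $ i))\<^sup>2" UNIV] by (simp add: tz_def o_def)
  finally show ?thesis .
qed

lemma wt_powr_summable:
  fixes c :: real
  assumes c: "c \<ge> real CARD('n)"
  shows "(\<lambda>j::int ^ ('n::{finite,linorder}). wt j powr (-c)) summable_on UNIV"
proof -
  have "(\<lambda>j::int ^ ('n::{finite,linorder}). \<Prod>i\<in>UNIV. tz (j $ i)) summable_on UNIV"
  proof (rule nn_bound_summable(1))
    show "\<And>x. 0 \<le> (\<Prod>i\<in>UNIV. tz (x $ i))" by (auto intro: prod_nonneg tz_nonneg)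
    show "\<And>F::(int ^ ('n::{finite,linorder})) set. finite F \<Longrightarrow> (\<Sum>j\<in>F. \<Prod>i\<in>UNIV. tz (j $ i)) \<le> (2 * TS) ^ CARD('n::{finite,linorder})"
      by (rule prod_tz_bound)
  qed
  then show ?thesis
    by (rule summable_on_comparison_test) (auto intro!: wt_powr_le_prod c)
qed


definition L1 :: "('n::{finite,linorder}) coeff \<Rightarrow> bool" where
  "L1 u \<longleftrightarrow> (\<lambda>k. norm (u k)) summable_on UNIV"
definition L1n :: "('n::{finite,linorder}) coeff \<Rightarrow> real" where
  "L1n u = infsum (\<lambda>k. norm (u k)) UNIV"
definition dlt :: "int ^ ('n::{finite,linorder}) \<Rightarrow> ('n::{finite,linorder}) coeff" where
  "dlt a = (\<lambda>p. if p = a then 1 else 0)"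

lemma infsum_single_pt:
  "infsum (\<lambda>k. if k = a then c else 0) UNIV = (c::'b::{comm_monoid_add,t2_space})"
  by (rule infsumI, rule has_sum_finite_neutralI[of "{a}"]) auto

lemma infsum_shift:
  fixes f :: "'a::ab_group_add \<Rightarrow> 'b::{comm_monoid_add,t2_space}"
  shows "infsum (\<lambda>k. f (l - k)) UNIV = infsum f UNIV"
proof -
  have inj: "inj (\<lambda>k::'a. l - k)" by (auto intro: injI)
  have im: "(\<lambda>k::'a. l - k) ` UNIV = UNIV"
    by (auto simp: image_iff intro!: exI[of _ "l - _"])
  show ?thesis using infsum_reindex[OF inj, of f] im by (simp add: o_def)
qed

lemma phase_zero_right[simp]: "phase \<theta> k 0 = 1" by (simp add: phase_def)
lemma norm_phase[simp]: "norm (phase \<theta> k l) = 1" by (simp add: phase_def)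

lemma tprod_dlt0: "tprod \<theta> u (dlt 0) = u"
proof
  fix p
  have "(\<lambda>k. u k * dlt 0 (p - k) * phase \<theta> k (p - k)) = (\<lambda>k. if k = p then u p else 0)"
    by (auto simp: dlt_def fun_eq_iff)
  then show "tprod \<theta> u (dlt 0) p = u p" by (simp add: tprod_def infsum_single_pt)
qed

lemma L1_le: "L1 u \<Longrightarrow> norm (u k) \<le> L1n u"
  unfolding L1_def L1n_def by (rule single_le_infsum) auto

lemma L1n_nonneg: "L1n u \<ge> 0" unfolding L1n_def by (simp add: infsum_nonneg)

lemma L1_l2:
  assumes "L1 u"
  shows "(\<lambda>k. (norm (u k))\<^sup>2) summable_on UNIV" "infsum (\<lambda>k. (norm (u k))\<^sup>2) UNIV \<le> (L1n u)\<^sup>2"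
proof -
  have "(\<Sum>k\<in>F. (norm (u k))\<^sup>2) \<le> (L1n u)\<^sup>2" if F: "finite F" for F
  proof -
    have "(\<Sum>k\<in>F. (norm (u k))\<^sup>2) \<le> (\<Sum>k\<in>F. norm (u k) * L1n u)"
      using L1_le[OF assms] by (intro sum_mono) (simp add: power2_eq_square mult_left_mono)
    also have "\<dots> = (\<Sum>k\<in>F. norm (u k)) * L1n u" by (simp add: sum_distrib_right)
    also have "\<dots> \<le> L1n u * L1n u"
      using finite_sum_le_infsum[of "\<lambda>k. norm (u k)" UNIV F] assms F L1n_nonneg[of u]
      by (intro mult_right_mono) (auto simp: L1_def L1n_def)
    finally show ?thesis by (simp add: power2_eq_square)
  qed
  then show "(\<lambda>k. (norm (u k))\<^sup>2) summable_on UNIV" "infsum (\<lambda>k. (norm (u k))\<^sup>2) UNIV \<le> (L1n u)\<^sup>2"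
    using nn_bound_summable[of "\<lambda>k. (norm (u k))\<^sup>2"] by auto
qed

lemma tprod_norm_le:
  fixes u \<xi> :: "('n::{finite,linorder}) coeff"
  assumes fin: "finite {k. \<xi> k \<noteq> 0}"
  shows "norm (tprod \<theta> u \<xi> p) \<le> infsum (\<lambda>k. norm (u (p - k)) * norm (\<xi> k)) UNIV"
proof -
  have fin2: "finite {k. \<xi> (p - k) \<noteq> 0}"
  proof -
    have "{k. \<xi> (p - k) \<noteq> 0} = (\<lambda>j. p - j) ` {k. \<xi> k \<noteq> 0}"
      by (auto simp: image_iff intro!: exI[of _ "p - _"])
    then show ?thesis using fin by simp
  qed
  have fs: "finite {k. u k * \<xi> (p - k) * phase \<theta> k (p - k) \<noteq> 0}"
    by (rule finite_subset[OF _ fin2]) auto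
  have "norm (tprod \<theta> u \<xi> p) \<le> infsum (\<lambda>k. norm (u k * \<xi> (p - k) * phase \<theta> k (p - k))) UNIV"
    unfolding tprod_def
    by (rule norm_infsum_bound, rule finite_nonzero_values_imp_summable_on)
       (rule finite_subset[OF _ fs], auto)
  also have "\<dots> = infsum (\<lambda>k. norm (u k) * norm (\<xi> (p - k))) UNIV"
    by (simp add: norm_mult)
  also have "\<dots> = infsum (\<lambda>k. norm (u (p - k)) * norm (\<xi> (p - (p - k)))) UNIV"
    by (rule infsum_shift[symmetric, where f="\<lambda>k. norm (u k) * norm (\<xi> (p - k))"])
  finally show ?thesis by simp
qed

lemma tprod_l2_bound:
  fixes u \<xi> :: "('n::{finite,linorder}) coeff"
  assumes u: "L1 u" and fin: "finite {k. \<xi> k \<noteq> 0}" and xi: "l2norm \<xi> \<le> 1"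
  shows "l2norm (tprod \<theta> u \<xi>) \<le> L1n u"
proof -
  define g where "g k = norm (u k)" for k
  define v where "v k = norm (\<xi> k)" for k
  have gs: "g summable_on UNIV" using u unfolding L1_def g_def by simp
  have vs: "(\<lambda>x. (v x)\<^sup>2) summable_on UNIV"
    unfolding v_def
    by (rule finite_nonzero_values_imp_summable_on, rule finite_subset[OF _ fin]) auto
  note Y = young[of g v, OF _ _ gs vs]
  have V1: "infsum (\<lambda>x. (v x)\<^sup>2) UNIV \<le> 1"
  proof -
    have "sqrt (infsum (\<lambda>x. (v x)\<^sup>2) UNIV) \<le> 1" using xi by (simp add: l2norm_def v_def)
    then show ?thesis by simp
  qed
  define h where "h p = infsum (\<lambda>k. g (p - k) * v k) UNIV" for p
  have le: "norm (tprod \<theta> u \<xi> p) \<le> h p" for p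
    unfolding h_def g_def v_def by (rule tprod_norm_le[OF fin])
  have hs: "(\<lambda>p. (h p)\<^sup>2) summable_on UNIV" unfolding h_def using Y(2) by (simp add: g_def v_def)
  have sq: "(norm (tprod \<theta> u \<xi> p))\<^sup>2 \<le> (h p)\<^sup>2" for p
    using le[of p] by (intro power_mono) auto
  have s1: "(\<lambda>p. (norm (tprod \<theta> u \<xi> p))\<^sup>2) summable_on UNIV"
    by (rule summable_on_comparison_test[OF hs]) (auto intro: sq)
  have "infsum (\<lambda>p. (norm (tprod \<theta> u \<xi> p))\<^sup>2) UNIV \<le> infsum (\<lambda>p. (h p)\<^sup>2) UNIV"
    by (rule infsum_mono[OF s1 hs sq])
  also have "\<dots> \<le> (infsum g UNIV)\<^sup>2 * infsum (\<lambda>x. (v x)\<^sup>2) UNIV"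
    unfolding h_def using Y(3) by (simp add: g_def v_def)
  also have "\<dots> \<le> (infsum g UNIV)\<^sup>2 * 1"
    by (intro mult_left_mono V1) auto
  finally have "infsum (\<lambda>p. (norm (tprod \<theta> u \<xi> p))\<^sup>2) UNIV \<le> (infsum g UNIV)\<^sup>2"
    by simp
  then have "infsum (\<lambda>p. (norm (tprod \<theta> u \<xi> p))\<^sup>2) UNIV \<le> (L1n u)\<^sup>2"
    unfolding L1n_def g_def .
  then show ?thesis unfolding l2norm_def
    using L1n_nonneg[of u] real_le_rsqrt real_sqrt_le_iff
    by (metis real_sqrt_abs real_sqrt_le_mono abs_of_nonneg)
qed

definition CS :: "('n::{finite,linorder}) coeff set" where
  "CS = {\<xi>. finite {k. \<xi> k \<noteq> 0} \<and> l2norm \<xi> \<le> 1}"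

lemma cnorm_CS: "cnorm \<theta> u = (SUP \<xi> \<in> CS. l2norm (tprod \<theta> u \<xi>))"
  by (simp add: cnorm_def CS_def)

lemma zero_CS: "(\<lambda>_. 0) \<in> CS" by (simp add: CS_def l2norm_def)

lemma dlt0_CS: "dlt 0 \<in> CS"
proof -
  have e: "(\<lambda>k. (norm (dlt 0 k))\<^sup>2) = (\<lambda>k. if k = 0 then 1 else 0::real)"
    by (auto simp: dlt_def fun_eq_iff)
  have "l2norm (dlt 0) = 1" unfolding l2norm_def e infsum_single_pt by simp
  moreover have "{k. dlt 0 k \<noteq> 0} = {0}" by (auto simp: dlt_def)
  ultimately show ?thesis unfolding CS_def mem_Collect_eq by (metis finite.emptyI finite_insert order_refl)
qed

lemma cnorm_bdd: "L1 u \<Longrightarrow> bdd_above ((\<lambda>\<xi>. l2norm (tprod \<theta> u \<xi>)) ` CS)"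
  by (rule bdd_aboveI2[of _ _ "L1n u"]) (auto simp: CS_def intro: tprod_l2_bound)

lemma cnorm_le: "L1 u \<Longrightarrow> cnorm \<theta> u \<le> L1n u"
  unfolding cnorm_CS
  apply (rule cSUP_least)
  using zero_CS apply blast
  by (auto simp: CS_def intro: tprod_l2_bound)

lemma cnorm_ge_l2: "L1 u \<Longrightarrow> \<xi> \<in> CS \<Longrightarrow> l2norm (tprod \<theta> u \<xi>) \<le> cnorm \<theta> u"
  unfolding cnorm_CS by (intro cSUP_upper cnorm_bdd)

lemma l2norm_nonneg: "l2norm \<xi> \<ge> 0" by (simp add: l2norm_def infsum_nonneg)

lemma cnorm_nonneg: "L1 u \<Longrightarrow> 0 \<le> cnorm \<theta> u"
  using cnorm_ge_l2[OF _ zero_CS, of u \<theta>] l2norm_nonneg order_trans by blast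

lemma cnorm_ge: assumes "L1 u" shows "norm (u j) \<le> cnorm \<theta> u"
proof -
  have "l2norm u \<le> cnorm \<theta> u" using cnorm_ge_l2[OF assms dlt0_CS, of \<theta>] by (simp add: tprod_dlt0)
  moreover have "norm (u j) \<le> l2norm u"
  proof -
    have "(norm (u j))\<^sup>2 \<le> infsum (\<lambda>k. (norm (u k))\<^sup>2) UNIV"
      by (rule single_le_infsum[OF L1_l2(1)[OF assms]]) auto
    then show ?thesis unfolding l2norm_def by (simp add: real_le_rsqrt)
  qed
  ultimately show ?thesis by linarith
qed


lemma Asm_decay:
  fixes u :: "('n::{finite,linorder}) coeff"
  assumes u: "u \<in> Asm" and c: "c \<ge> 0"
  shows "\<exists>C\<ge>0. \<forall>k. norm (u k) \<le> C * wt k powr (-c)"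
proof -
  define N where "N = nat \<lceil>2 * c\<rceil>"
  obtain C where C: "\<And>k. norm (u k) * (1 + knorm k) ^ N \<le> C"
    using u unfolding Asm_def by blast
  have C0: "C \<ge> 0" using C[of 0] by (metis knorm_nonneg norm_ge_zero order_trans zero_le_mult_iff zero_le_power add_nonneg_nonneg zero_le_one)
  have "norm (u k) \<le> C * wt k powr (-c)" for k
  proof -
    have p1: "1 + knorm k \<ge> 1" using knorm_nonneg[of k] by simp
    have "wt k powr c \<le> ((1 + knorm k)\<^sup>2) powr c"
      using wt_le_sq[of k] c wt_pos[of k] by (intro powr_mono2) auto
    also have "((1 + knorm k)\<^sup>2) powr c = (1 + knorm k) powr (2 * c)"
    proof -
      have e: "(1 + knorm k) powr 2 = (1 + knorm k)\<^sup>2" using p1 by simp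
      have "((1 + knorm k)\<^sup>2) powr c = ((1 + knorm k) powr 2) powr c" by (simp only: e)
      also have "\<dots> = (1 + knorm k) powr (2 * c)" by (simp only: powr_powr)
      finally show ?thesis .
    qed
    also have "\<dots> \<le> (1 + knorm k) powr (real N)"
      using p1 real_nat_ceiling_ge[of "2 * c"] by (intro powr_mono) (auto simp: N_def)
    also have "\<dots> = (1 + knorm k) ^ N" using p1 by (simp add: powr_realpow)
    finally have a: "wt k powr c \<le> (1 + knorm k) ^ N" .
    have wp: "wt k powr c > 0" using wt_pos[of k] by simp
    have "norm (u k) * wt k powr c \<le> C"
      using C[of k] a by (meson mult_left_mono norm_ge_zero order_trans)
    then have "norm (u k) \<le> C / wt k powr c" using wp by (simp add: field_simps)
    then show ?thesis by (simp add: powr_minus divide_inverse)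
  qed
  then show ?thesis using C0 by blast
qed

lemma Asm_L1:
  fixes u :: "('n::{finite,linorder}) coeff"
  assumes u: "u \<in> Asm" shows "L1 u"
proof -
  obtain C where C: "C \<ge> 0" "\<And>k. norm (u k) \<le> C * wt k powr (- real CARD('n))"
    using Asm_decay[OF u, of "real CARD('n)"] by auto
  have ws: "(\<lambda>k::int ^ ('n::{finite,linorder}). wt k powr (- real CARD('n))) summable_on UNIV"
    by (rule wt_powr_summable) simp
  have "(\<lambda>k::int ^ ('n::{finite,linorder}). C * wt k powr (- real CARD('n))) summable_on UNIV"
    by (intro summable_on_cmult_right ws)
  then show ?thesis unfolding L1_def
    by (rule summable_on_comparison_test) (use C in auto)
qed

lemma Asm_lin:
  assumes "u \<in> Asm" "v \<in> Asm"
  shows "(\<lambda>k. a * u k + b * v k) \<in> Asm"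
  unfolding Asm_def
proof (intro CollectI allI)
  fix N :: nat
  obtain C1 where C1: "\<And>k. norm (u k) * (1 + knorm k) ^ N \<le> C1" using assms(1) unfolding Asm_def by blast
  obtain C2 where C2: "\<And>k. norm (v k) * (1 + knorm k) ^ N \<le> C2" using assms(2) unfolding Asm_def by blast
  have "norm (a * u k + b * v k) * (1 + knorm k) ^ N \<le> norm a * C1 + norm b * C2" for k
  proof -
    have w: "(1 + knorm k) ^ N \<ge> 0" using knorm_nonneg[of k] by simp
    have "norm (a * u k + b * v k) * (1 + knorm k) ^ N \<le> (norm a * norm (u k) + norm b * norm (v k)) * (1 + knorm k) ^ N"
      using w by (intro mult_right_mono) (auto intro: norm_triangle_le simp: norm_mult)
    also have "\<dots> = norm a * (norm (u k) * (1 + knorm k) ^ N) + norm b * (norm (v k) * (1 + knorm k) ^ N)"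
      by (simp add: algebra_simps)
    also have "\<dots> \<le> norm a * C1 + norm b * C2"
      by (intro add_mono mult_left_mono C1 C2) auto
    finally show ?thesis .
  qed
  then show "\<exists>C. \<forall>k. norm (a * u k + b * v k) * (1 + knorm k) ^ N \<le> C" by blast
qed

lemma Asm_finite:
  assumes "finite {k. u k \<noteq> 0}" shows "u \<in> Asm"
  unfolding Asm_def
proof (intro CollectI allI)
  fix N :: nat
  define S where "S = {k. u k \<noteq> 0}"
  have "norm (u k) * (1 + knorm k) ^ N \<le> (\<Sum>j\<in>S. norm (u j) * (1 + knorm j) ^ N)" for k
  proof (cases "k \<in> S")
    case True
    then show ?thesis using assms
      by (intro member_le_sum) (auto simp: S_def knorm_nonneg)
  next
    case False
    then show ?thesis by (auto simp: S_def intro!: sum_nonneg mult_nonneg_nonneg add_nonneg_nonneg knorm_nonneg zero_le_power)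
  qed
  then show "\<exists>C. \<forall>k. norm (u k) * (1 + knorm k) ^ N \<le> C" by blast
qed

lemma prod_pow_le:
  fixes k :: "int ^ ('n::{finite,linorder})"
  shows "(\<Prod>i\<in>UNIV. \<bar>real_of_int (k $ i)\<bar> ^ (\<alpha> $ i)) \<le> (1 + knorm k) ^ mlen \<alpha>"
proof -
  have "(\<Prod>i\<in>UNIV. \<bar>real_of_int (k $ i)\<bar> ^ (\<alpha> $ i)) \<le> (\<Prod>i\<in>UNIV. (1 + knorm k) ^ (\<alpha> $ i))"
    by (intro prod_mono conjI power_mono) (auto simp: knorm_comp intro: order_trans[OF knorm_comp])
  also have "\<dots> = (1 + knorm k) ^ mlen \<alpha>" by (simp add: mlen_def power_sum)
  finally show ?thesis .
qed

lemma norm_delta: "norm (delta \<alpha> u k) = (\<Prod>i\<in>UNIV. \<bar>real_of_int (k $ i)\<bar> ^ (\<alpha> $ i)) * norm (u k)"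
  by (simp add: delta_def norm_mult prod_norm[symmetric] norm_power)

lemma delta_Asm:
  assumes u: "u \<in> Asm" shows "delta \<alpha> u \<in> Asm"
  unfolding Asm_def
proof (intro CollectI allI)
  fix N :: nat
  obtain C where C: "\<And>k. norm (u k) * (1 + knorm k) ^ (N + mlen \<alpha>) \<le> C"
    using u unfolding Asm_def by blast
  have "norm (delta \<alpha> u k) * (1 + knorm k) ^ N \<le> C" for k
  proof -
    have w: "(1 + knorm k) ^ N \<ge> 0" using knorm_nonneg[of k] by simp
    have "norm (delta \<alpha> u k) * (1 + knorm k) ^ N \<le> ((1 + knorm k) ^ mlen \<alpha> * norm (u k)) * (1 + knorm k) ^ N"
      unfolding norm_delta using w prod_pow_le[of k \<alpha>]
      by (intro mult_right_mono) (auto intro: mult_right_mono)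
    also have "\<dots> = norm (u k) * (1 + knorm k) ^ (N + mlen \<alpha>)" by (simp add: power_add algebra_simps)
    also have "\<dots> \<le> C" by (rule C)
    finally show ?thesis .
  qed
  then show "\<exists>C. \<forall>k. norm (delta \<alpha> u k) * (1 + knorm k) ^ N \<le> C" by blast
qed

lemma delta_lin: "delta \<alpha> (\<lambda>k. a * u k + b * v k) = (\<lambda>k. a * delta \<alpha> u k + b * delta \<alpha> v k)"
  by (simp add: delta_def fun_eq_iff algebra_simps)

lemma delta_zero[simp]: "delta 0 u = u"
  by (simp add: delta_def)

lemma tprod_sq_summable:
  fixes u \<xi> :: "('n::{finite,linorder}) coeff"
  assumes u: "L1 u" and fin: "finite {k. \<xi> k \<noteq> 0}"
  shows "(\<lambda>p. (norm (tprod \<theta> u \<xi> p))\<^sup>2) summable_on UNIV"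
proof -
  define g where "g k = norm (u k)" for k
  define v where "v k = norm (\<xi> k)" for k
  have gs: "g summable_on UNIV" using u unfolding L1_def g_def by simp
  have vs: "(\<lambda>x. (v x)\<^sup>2) summable_on UNIV"
    unfolding v_def
    by (rule finite_nonzero_values_imp_summable_on, rule finite_subset[OF _ fin]) auto
  note Y = young[of g v, OF _ _ gs vs]
  define h where "h p = infsum (\<lambda>k. g (p - k) * v k) UNIV" for p
  have le: "norm (tprod \<theta> u \<xi> p) \<le> h p" for p
    unfolding h_def g_def v_def by (rule tprod_norm_le[OF fin])
  have hs: "(\<lambda>p. (h p)\<^sup>2) summable_on UNIV" unfolding h_def using Y(2) by (simp add: g_def v_def)
  have sq: "(norm (tprod \<theta> u \<xi> p))\<^sup>2 \<le> (h p)\<^sup>2" for p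
    using le[of p] by (intro power_mono) auto
  show ?thesis
    by (rule summable_on_comparison_test[OF hs]) (auto intro: sq)
qed

lemma minkowski:
  fixes x y :: "('n::{finite,linorder}) coeff"
  assumes xs: "(\<lambda>p. (norm (x p))\<^sup>2) summable_on UNIV" and ys: "(\<lambda>p. (norm (y p))\<^sup>2) summable_on UNIV"
  shows "l2norm (\<lambda>p. a * x p + b * y p) \<le> norm a * l2norm x + norm b * l2norm y"
proof -
  define R where "R = norm a * l2norm x + norm b * l2norm y"
  have R0: "R \<ge> 0" unfolding R_def by (intro add_nonneg_nonneg mult_nonneg_nonneg l2norm_nonneg) auto
  have L2x: "L2_set (\<lambda>p. norm (z p)) F \<le> l2norm z" if "finite F" "(\<lambda>p. (norm (z p))\<^sup>2) summable_on UNIV"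
    for F and z :: "('n::{finite,linorder}) coeff"
    unfolding L2_set_def l2norm_def
    by (intro real_sqrt_le_mono finite_sum_le_infsum that) auto
  have "(\<Sum>p\<in>F. (norm (a * x p + b * y p))\<^sup>2) \<le> R\<^sup>2" if F: "finite F" for F
  proof -
    have "L2_set (\<lambda>p. norm (a * x p + b * y p)) F \<le> L2_set (\<lambda>p. norm a * norm (x p) + norm b * norm (y p)) F"
      by (rule L2_set_mono) (auto intro: norm_triangle_le simp: norm_mult)
    also have "\<dots> \<le> L2_set (\<lambda>p. norm a * norm (x p)) F + L2_set (\<lambda>p. norm b * norm (y p)) F"
      by (rule L2_set_triangle_ineq)
    also have "\<dots> = norm a * L2_set (\<lambda>p. norm (x p)) F + norm b * L2_set (\<lambda>p. norm (y p)) F"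
      by (simp add: L2_set_right_distrib)
    also have "\<dots> \<le> R" unfolding R_def
      by (intro add_mono mult_left_mono L2x F xs ys) auto
    finally have "sqrt (\<Sum>p\<in>F. (norm (a * x p + b * y p))\<^sup>2) \<le> R" by (simp add: L2_set_def)
    then show ?thesis using R0 by (simp add: real_sqrt_le_iff sqrt_le_D)
  qed
  then have "infsum (\<lambda>p. (norm (a * x p + b * y p))\<^sup>2) UNIV \<le> R\<^sup>2"
    using nn_bound_summable[of "\<lambda>p. (norm (a * x p + b * y p))\<^sup>2" "R\<^sup>2"] by auto
  then have "sqrt (infsum (\<lambda>p. (norm (a * x p + b * y p))\<^sup>2) UNIV) \<le> sqrt (R\<^sup>2)"
    by (rule real_sqrt_le_mono)
  then have "sqrt (infsum (\<lambda>p. (norm (a * x p + b * y p))\<^sup>2) UNIV) \<le> R"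
    using R0 by simp
  then show ?thesis by (simp add: l2norm_def R_def)
qed

lemma tprod_lin:
  fixes u v \<xi> :: "('n::{finite,linorder}) coeff"
  assumes fin: "finite {k. \<xi> k \<noteq> 0}"
  shows "tprod \<theta> (\<lambda>k. a * u k + b * v k) \<xi> = (\<lambda>p. a * tprod \<theta> u \<xi> p + b * tprod \<theta> v \<xi> p)"
proof
  fix p
  have fin2: "finite {k. \<xi> (p - k) \<noteq> 0}"
  proof -
    have "{k. \<xi> (p - k) \<noteq> 0} = (\<lambda>j. p - j) ` {k. \<xi> k \<noteq> 0}"
      by (auto simp: image_iff intro!: exI[of _ "p - _"])
    then show ?thesis using fin by simp
  qed
  have s: "(\<lambda>k. w k * \<xi> (p - k) * phase \<theta> k (p - k)) summable_on UNIV" for w :: "('n::{finite,linorder}) coeff"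
    by (rule finite_nonzero_values_imp_summable_on, rule finite_subset[OF _ fin2]) auto
  have "tprod \<theta> (\<lambda>k. a * u k + b * v k) \<xi> p
      = infsum (\<lambda>k. a * (u k * \<xi> (p - k) * phase \<theta> k (p - k)) + b * (v k * \<xi> (p - k) * phase \<theta> k (p - k))) UNIV"
    unfolding tprod_def by (simp add: algebra_simps)
  also have "\<dots> = a * tprod \<theta> u \<xi> p + b * tprod \<theta> v \<xi> p"
    unfolding tprod_def
    by (subst infsum_add) (auto intro!: summable_on_cmult_right s simp: infsum_cmult_right s)
  finally show "tprod \<theta> (\<lambda>k. a * u k + b * v k) \<xi> p = a * tprod \<theta> u \<xi> p + b * tprod \<theta> v \<xi> p" .
qed

lemma cnorm_lin:
  fixes u v :: "('n::{finite,linorder}) coeff"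
  assumes u: "L1 u" and v: "L1 v"
  shows "cnorm \<theta> (\<lambda>k. a * u k + b * v k) \<le> norm a * cnorm \<theta> u + norm b * cnorm \<theta> v"
  unfolding cnorm_CS[of \<theta> "\<lambda>k. a * u k + b * v k"]
proof (rule cSUP_least)
  show "CS \<noteq> {}" using zero_CS by blast
  fix \<xi> :: "('n::{finite,linorder}) coeff" assume xi: "\<xi> \<in> CS"
  then have fin: "finite {k. \<xi> k \<noteq> 0}" by (simp add: CS_def)
  have "l2norm (tprod \<theta> (\<lambda>k. a * u k + b * v k) \<xi>)
      \<le> norm a * l2norm (tprod \<theta> u \<xi>) + norm b * l2norm (tprod \<theta> v \<xi>)"
    unfolding tprod_lin[OF fin]
    by (rule minkowski; rule tprod_sq_summable[OF _ fin]) (use u v in auto)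
  also have "\<dots> \<le> norm a * cnorm \<theta> u + norm b * cnorm \<theta> v"
    by (intro add_mono mult_left_mono cnorm_ge_l2 u v xi) auto
  finally show "l2norm (tprod \<theta> (\<lambda>k. a * u k + b * v k) \<xi>) \<le> norm a * cnorm \<theta> u + norm b * cnorm \<theta> v" .
qed


lemma mlen_add: "mlen (a + b) = mlen a + mlen b"
  by (simp add: mlen_def sum.distrib)

lemma mlen_axis: "mlen (axis j (1::nat)) = 1"
  by (simp add: mlen_def axis_def)

lemma mlen_axis': "mlen (axis j (Suc 0)) = Suc 0"
  using mlen_axis[of j] by simp

lemma mlen_zero[simp]: "mlen (0 :: nat ^ ('n::{finite,linorder})) = 0"
  by (simp add: mlen_def)

lemma mlen0: "mlen (\<beta> :: nat ^ ('n::{finite,linorder})) = 0 \<Longrightarrow> \<beta> = 0"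
  by (simp add: mlen_def vec_eq_iff)

lemma nth_le_mlen: "\<beta> $ i \<le> mlen \<beta>"
  unfolding mlen_def by (rule member_le_sum) auto

lemma mlen_decomp:
  fixes \<beta> :: "nat ^ ('n::{finite,linorder})"
  assumes "mlen \<beta> \<noteq> 0"
  shows "\<exists>j \<beta>'. \<beta> = \<beta>' + axis j 1 \<and> mlen \<beta>' < mlen \<beta>"
proof -
  have "\<beta> \<noteq> 0" using assms by auto
  then obtain j where j: "\<beta> $ j \<noteq> 0" by (auto simp: vec_eq_iff)
  define \<beta>' where "\<beta>' = (\<chi> i. if i = j then \<beta> $ i - 1 else \<beta> $ i)"
  have e: "\<beta> = \<beta>' + axis j 1"
    unfolding vec_eq_iff \<beta>'_def axis_def using j by simp
  then have "mlen \<beta> = mlen \<beta>' + 1" by (simp add: mlen_add mlen_axis')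
  then show ?thesis using e by auto
qed

lemma Asm_dq:
  assumes "A \<in> Asm" "B \<in> Asm" "X \<in> Asm"
  shows "(\<lambda>k. (A k - B k) / c - X k) \<in> Asm"
proof -
  have "(\<lambda>k. (1/c) * A k + 1 * ((-1/c) * B k + (-1) * X k)) \<in> Asm"
    by (intro Asm_lin assms)
  moreover have "(\<lambda>k. (1/c) * A k + 1 * ((-1/c) * B k + (-1) * X k)) = (\<lambda>k. (A k - B k) / c - X k)"
    by (simp add: fun_eq_iff diff_divide_distrib)
  ultimately show ?thesis by simp
qed

lemma Asm_diff:
  assumes "A \<in> Asm" "B \<in> Asm"
  shows "(\<lambda>k. A k - B k) \<in> Asm"
  using Asm_lin[OF assms, of 1 "-1"] by simp

lemma sf_deriv:
  assumes "smooth_family \<theta> \<rho> D"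
  shows "((\<lambda>h. cnorm \<theta> (delta \<alpha>
          (\<lambda>k. (D \<beta> (\<xi> + h *\<^sub>R axis j 1) k - D \<beta> \<xi> k) / complex_of_real h
                 - D (\<beta> + axis j 1) \<xi> k))) \<longlongrightarrow> 0) (at 0)"
proof -
  have "\<forall>\<beta> \<xi> \<alpha> j. ((\<lambda>h. cnorm \<theta> (delta \<alpha>
          (\<lambda>k. (D \<beta> (\<xi> + h *\<^sub>R axis j 1) k - D \<beta> \<xi> k) / complex_of_real h
                 - D (\<beta> + axis j 1) \<xi> k))) \<longlongrightarrow> 0) (at 0)"
    using assms unfolding smooth_family_def by (elim conjE)
  then show ?thesis by blast
qed

lemma sf_cont:
  assumes "smooth_family \<theta> \<rho> D"
  shows "((\<lambda>\<eta>. cnorm \<theta> (delta \<alpha> (\<lambda>k. D \<beta> \<eta> k - D \<beta> \<xi> k))) \<longlongrightarrow> 0) (at \<xi>)"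
proof -
  have "\<forall>\<beta> \<xi> \<alpha>. ((\<lambda>\<eta>. cnorm \<theta> (delta \<alpha> (\<lambda>k. D \<beta> \<eta> k - D \<beta> \<xi> k))) \<longlongrightarrow> 0) (at \<xi>)"
    using assms unfolding smooth_family_def by (elim conjE)
  then show ?thesis by blast
qed

lemma sf_Asm: "smooth_family \<theta> \<rho> D \<Longrightarrow> D \<beta> \<xi> \<in> Asm"
  unfolding smooth_family_def by blast

lemma sf_0: "smooth_family \<theta> \<rho> D \<Longrightarrow> D 0 = \<rho>"
  unfolding smooth_family_def by blast

lemma smooth_unique:
  fixes D D' :: "nat ^ ('n::{finite,linorder}) \<Rightarrow> real ^ ('n::{finite,linorder}) \<Rightarrow> ('n::{finite,linorder}) coeff"
  assumes D: "smooth_family \<theta> \<rho> D" and D': "smooth_family \<theta> \<rho> D'"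
  shows "D = D'"
proof -
  have DA: "\<And>\<beta> \<xi>. D \<beta> \<xi> \<in> Asm" and D'A: "\<And>\<beta> \<xi>. D' \<beta> \<xi> \<in> Asm"
    using D D' by (auto simp: smooth_family_def)
  have key: "\<forall>\<beta>. mlen \<beta> = n \<longrightarrow> D \<beta> = D' \<beta>" for n
  proof (induction n rule: less_induct)
    case (less n)
    show ?case
    proof (intro allI impI)
      fix \<beta> :: "nat ^ ('n::{finite,linorder})" assume bn: "mlen \<beta> = n"
      show "D \<beta> = D' \<beta>"
      proof (cases "n = 0")
        case True
        then have "\<beta> = 0" using bn mlen0 by auto
        then show ?thesis using D D' by (simp add: smooth_family_def)
      next
        case False
        then obtain j \<beta>' where b: "\<beta> = \<beta>' + axis j 1" and lt: "mlen \<beta>' < n"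
          using mlen_decomp[of \<beta>] bn by auto
        have IH: "D \<beta>' = D' \<beta>'" using less.IH[OF lt] by simp
        show ?thesis
        proof (rule ext, rule ext)
          fix \<xi> k
          define q where "q h = (\<lambda>k. (D \<beta>' (\<xi> + h *\<^sub>R axis j 1) k - D \<beta>' \<xi> k) / complex_of_real h)" for h
          have lim: "((\<lambda>h. q h k) \<longlongrightarrow> E \<beta> \<xi> k) (at 0)"
            if sf: "smooth_family \<theta> \<rho> E" and EA: "\<And>\<beta> \<xi>. E \<beta> \<xi> \<in> Asm" and Eb: "E \<beta>' = D \<beta>'" for E
          proof -
            have t: "((\<lambda>h. cnorm \<theta> (delta 0 (\<lambda>k. (E \<beta>' (\<xi> + h *\<^sub>R axis j 1) k - E \<beta>' \<xi> k) / complex_of_real h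
                 - E (\<beta>' + axis j 1) \<xi> k))) \<longlongrightarrow> 0) (at 0)"
              by (rule sf_deriv[OF sf])
            have t2: "((\<lambda>h. cnorm \<theta> (\<lambda>k. q h k - E \<beta> \<xi> k)) \<longlongrightarrow> 0) (at 0)"
              using t unfolding b q_def Eb by simp
            have "((\<lambda>h. q h k - E \<beta> \<xi> k) \<longlongrightarrow> 0) (at 0)"
            proof (rule Lim_null_comparison[OF _ t2], rule always_eventually, rule allI)
              fix h
              have "(\<lambda>k. q h k - E \<beta> \<xi> k) \<in> Asm" unfolding q_def
                by (rule Asm_dq) (auto simp: DA EA)
              then show "norm (q h k - E \<beta> \<xi> k) \<le> cnorm \<theta> (\<lambda>k. q h k - E \<beta> \<xi> k)"
                by (intro cnorm_ge[where u="\<lambda>k. q h k - E \<beta> \<xi> k", simplified] Asm_L1)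
            qed
            then show ?thesis by (simp add: LIM_zero_iff)
          qed
          have l1: "((\<lambda>h. q h k) \<longlongrightarrow> D \<beta> \<xi> k) (at 0)" by (rule lim[OF D DA refl])
          have l2: "((\<lambda>h. q h k) \<longlongrightarrow> D' \<beta> \<xi> k) (at 0)" by (rule lim[OF D' D'A IH[symmetric]])
          show "D \<beta> \<xi> k = D' \<beta> \<xi> k" using tendsto_unique[OF _ l1 l2] by simp
        qed
      qed
    qed
  qed
  show ?thesis using key by blast
qed

lemma symD_eq: assumes "smooth_family \<theta> \<rho> D" shows "symD \<theta> \<rho> = D"
  unfolding symD_def using someI[of "smooth_family \<theta> \<rho>" D] assms smooth_unique by blast

lemma finite_mlen: "finite {\<alpha> :: nat ^ ('n::{finite,linorder}). mlen \<alpha> \<le> N}"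
proof -
  have "{\<alpha> :: nat ^ ('n::{finite,linorder}). mlen \<alpha> \<le> N} \<subseteq> vec_lambda ` PiE UNIV (\<lambda>_. {..N})"
  proof
    fix \<alpha> :: "nat ^ ('n::{finite,linorder})" assume "\<alpha> \<in> {\<alpha>. mlen \<alpha> \<le> N}"
    then have "vec_nth \<alpha> \<in> PiE UNIV (\<lambda>_. {..N})" using nth_le_mlen[of \<alpha>] by (auto intro: order_trans)
    then show "\<alpha> \<in> vec_lambda ` PiE UNIV (\<lambda>_. {..N})" by (auto intro!: image_eqI[of _ _ "vec_nth \<alpha>"])
  qed
  moreover have "finite (vec_lambda ` PiE (UNIV :: ('n::{finite,linorder}) set) (\<lambda>_. {..N}))" by (intro finite_imageI finite_PiE) auto
  ultimately show ?thesis by (rule finite_subset)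
qed

definition sterm :: "real ^ ('n::{finite,linorder}) ^ ('n::{finite,linorder}) \<Rightarrow> real \<Rightarrow> (real ^ ('n::{finite,linorder}) \<Rightarrow> ('n::{finite,linorder}) coeff) \<Rightarrow> (nat ^ ('n::{finite,linorder})) \<times> (nat ^ ('n::{finite,linorder})) \<times> (real ^ ('n::{finite,linorder})) \<Rightarrow> real" where
  "sterm \<theta> m \<rho> = (\<lambda>(\<alpha>, \<beta>, \<xi>). (1 + norm \<xi>) powr (real (mlen \<beta>) - m) * cnorm \<theta> (delta \<alpha> (symD \<theta> \<rho> \<beta> \<xi>)))"

lemma symb_seminorm_sterm:
  "symb_seminorm \<theta> m N \<rho> = Sup (sterm \<theta> m \<rho> ` {(\<alpha>, \<beta>, \<xi>). mlen \<alpha> + mlen \<beta> \<le> N})"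
  by (simp add: symb_seminorm_def sterm_def)

lemma symb_bdd:
  fixes \<rho> :: "real ^ ('n::{finite,linorder}) \<Rightarrow> ('n::{finite,linorder}) coeff"
  assumes r: "\<rho> \<in> symbol_class \<theta> m"
  shows "bdd_above (sterm \<theta> m \<rho> ` {(\<alpha>, \<beta>, \<xi>). mlen \<alpha> + mlen \<beta> \<le> N})"
proof -
  obtain D where sf: "smooth_family \<theta> \<rho> D" and bnd: "\<And>\<alpha> \<beta>. \<exists>C. \<forall>\<xi>. cnorm \<theta> (delta \<alpha> (D \<beta> \<xi>)) \<le> C * (1 + norm \<xi>) powr (m - real (mlen \<beta>))"
    using r unfolding symbol_class_def by blast
  have "\<forall>p. \<exists>c. \<forall>\<xi>. cnorm \<theta> (delta (fst p) (D (snd p) \<xi>)) \<le> c * (1 + norm \<xi>) powr (m - real (mlen (snd p)))"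
    using bnd by simp
  from choice[OF this] obtain C0 where C0: "\<forall>p \<xi>. cnorm \<theta> (delta (fst p) (D (snd p) \<xi>)) \<le> C0 p * (1 + norm \<xi>) powr (m - real (mlen (snd p)))"
    by blast
  define C where "C a b = C0 (a, b)" for a b
  have C: "\<And>\<alpha> \<beta> \<xi>. cnorm \<theta> (delta \<alpha> (D \<beta> \<xi>)) \<le> C \<alpha> \<beta> * (1 + norm \<xi>) powr (m - real (mlen \<beta>))"
    using C0 unfolding C_def by (metis fst_conv snd_conv)
  have sD: "symD \<theta> \<rho> = D" by (rule symD_eq[OF sf])
  define A where "A = {\<alpha> :: nat ^ ('n::{finite,linorder}). mlen \<alpha> \<le> N}"
  have Af: "finite A" unfolding A_def by (rule finite_mlen)
  define B where "B = (\<Sum>p\<in>A \<times> A. \<bar>C (fst p) (snd p)\<bar>)"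
  show ?thesis
  proof (rule bdd_aboveI2[of _ _ B], clarsimp)
    fix \<alpha> \<beta> :: "nat ^ ('n::{finite,linorder})" and \<xi> :: "real ^ ('n::{finite,linorder})"
    assume le: "mlen \<alpha> + mlen \<beta> \<le> N"
    have x0: "1 + norm \<xi> > 0" by (simp add: add_pos_nonneg)
    have "sterm \<theta> m \<rho> (\<alpha>, \<beta>, \<xi>) \<le> (1 + norm \<xi>) powr (real (mlen \<beta>) - m) * (C \<alpha> \<beta> * (1 + norm \<xi>) powr (m - real (mlen \<beta>)))"
      unfolding sterm_def sD by (simp add: C mult_left_mono)
    also have "\<dots> = C \<alpha> \<beta> * ((1 + norm \<xi>) powr (real (mlen \<beta>) - m) * (1 + norm \<xi>) powr (m - real (mlen \<beta>)))"
      by (simp add: algebra_simps)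
    also have "(1 + norm \<xi>) powr (real (mlen \<beta>) - m) * (1 + norm \<xi>) powr (m - real (mlen \<beta>)) = 1"
      using x0 by (simp add: powr_add[symmetric])
    also have "C \<alpha> \<beta> * 1 \<le> B"
    proof -
      have "(\<alpha>, \<beta>) \<in> A \<times> A" using le by (auto simp: A_def)
      then have "\<bar>C \<alpha> \<beta>\<bar> \<le> B" unfolding B_def
        using member_le_sum[of "(\<alpha>, \<beta>)" "A \<times> A" "\<lambda>p. \<bar>C (fst p) (snd p)\<bar>"] Af by auto
      then show ?thesis by simp
    qed
    finally show "sterm \<theta> m \<rho> (\<alpha>, \<beta>, \<xi>) \<le> B" .
  qed
qed

lemma sterm_le:
  assumes r: "\<rho> \<in> symbol_class \<theta> m" and le: "mlen \<alpha> + mlen \<beta> \<le> N"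
  shows "sterm \<theta> m \<rho> (\<alpha>, \<beta>, \<xi>) \<le> symb_seminorm \<theta> m N \<rho>"
  unfolding symb_seminorm_sterm using le by (intro cSUP_upper symb_bdd[OF r]) auto

lemma class_sf: assumes r: "\<rho> \<in> symbol_class \<theta> m" shows "smooth_family \<theta> \<rho> (symD \<theta> \<rho>)"
proof -
  obtain D where sf: "smooth_family \<theta> \<rho> D" using r unfolding symbol_class_def by blast
  then show ?thesis using symD_eq by metis
qed

lemma class_Asm: assumes r: "\<rho> \<in> symbol_class \<theta> m" shows "\<rho> \<xi> \<in> Asm"
  using class_sf[OF r] unfolding smooth_family_def by metis

lemma delta_bound:
  assumes r: "\<rho> \<in> symbol_class \<theta> m" and le: "mlen \<alpha> \<le> N"
  shows "norm (delta \<alpha> (\<rho> \<xi>) j) \<le> symb_seminorm \<theta> m N \<rho> * (1 + norm \<xi>) powr m"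
proof -
  have sf: "smooth_family \<theta> \<rho> (symD \<theta> \<rho>)" by (rule class_sf[OF r])
  then have s0: "symD \<theta> \<rho> 0 = \<rho>" by (simp add: smooth_family_def)
  have t: "sterm \<theta> m \<rho> (\<alpha>, 0, \<xi>) \<le> symb_seminorm \<theta> m N \<rho>" using le by (intro sterm_le[OF r]) simp
  have x0: "1 + norm \<xi> > 0" by (simp add: add_pos_nonneg)
  have "norm (delta \<alpha> (\<rho> \<xi>) j) \<le> cnorm \<theta> (delta \<alpha> (\<rho> \<xi>))"
    by (intro cnorm_ge Asm_L1 delta_Asm class_Asm[OF r])
  also have "\<dots> = (1 + norm \<xi>) powr m * sterm \<theta> m \<rho> (\<alpha>, 0, \<xi>)"
    using x0 by (simp add: sterm_def s0 powr_minus)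
  also have "\<dots> \<le> (1 + norm \<xi>) powr m * symb_seminorm \<theta> m N \<rho>"
    by (intro mult_left_mono t) simp
  finally show ?thesis by (simp add: mult.commute)
qed


lemma pow_bound:
  fixes j :: "int ^ ('n::{finite,linorder})"
  shows "(1 + knorm j) ^ N \<le> (real CARD('n) + 1) ^ N * (1 + (\<Sum>i\<in>UNIV. \<bar>real_of_int (j $ i)\<bar> ^ N))"
proof -
  define T where "T = insert 1 ((\<lambda>i. \<bar>real_of_int (j $ i)\<bar>) ` (UNIV :: ('n::{finite,linorder}) set))"
  define M where "M = Max T"
  have Tf: "finite T" "T \<noteq> {}" by (auto simp: T_def)
  have M1: "1 \<le> M" unfolding M_def by (rule Max_ge) (auto simp: T_def Tf)
  have Mi: "\<bar>real_of_int (j $ i)\<bar> \<le> M" for i unfolding M_def by (rule Max_ge) (auto simp: T_def Tf)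
  have "1 + knorm j \<le> 1 + (\<Sum>i\<in>UNIV. \<bar>real_of_int (j $ i)\<bar>)" using knorm_sum[of j] by simp
  also have "\<dots> \<le> M + (\<Sum>i\<in>(UNIV::('n::{finite,linorder}) set). M)" using M1 Mi by (intro add_mono sum_mono) auto
  also have "\<dots> = (real CARD('n) + 1) * M" by (simp add: algebra_simps)
  finally have a: "1 + knorm j \<le> (real CARD('n) + 1) * M" .
  have "(1 + knorm j) ^ N \<le> ((real CARD('n) + 1) * M) ^ N"
    using a knorm_nonneg[of j] by (intro power_mono) auto
  also have "\<dots> = (real CARD('n) + 1) ^ N * M ^ N" by (simp add: power_mult_distrib)
  also have "M ^ N \<le> 1 + (\<Sum>i\<in>UNIV. \<bar>real_of_int (j $ i)\<bar> ^ N)"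
  proof -
    have "M \<in> T" unfolding M_def using Tf by (rule Max_in)
    then consider "M = 1" | i where "M = \<bar>real_of_int (j $ i)\<bar>" by (auto simp: T_def)
    then show ?thesis
    proof cases
      case 1 then show ?thesis by (simp add: sum_nonneg)
    next
      case (2 i)
      have "M ^ N \<le> (\<Sum>i\<in>UNIV. \<bar>real_of_int (j $ i)\<bar> ^ N)"
        unfolding 2 by (rule member_le_sum) auto
      then show ?thesis by simp
    qed
  qed
  then have "(real CARD('n) + 1) ^ N * M ^ N \<le> (real CARD('n) + 1) ^ N * (1 + (\<Sum>i\<in>UNIV. \<bar>real_of_int (j $ i)\<bar> ^ N))"
    by (intro mult_left_mono) auto
  finally show ?thesis .
qed

lemma coeff_bound:
  fixes \<rho> :: "real ^ ('n::{finite,linorder}) \<Rightarrow> ('n::{finite,linorder}) coeff"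
  assumes r: "\<rho> \<in> symbol_class \<theta> m"
  shows "(1 + knorm j) ^ N * norm (\<rho> \<xi> j) \<le> (real CARD('n) + 1) ^ (N + 1) * (symb_seminorm \<theta> m N \<rho> * (1 + norm \<xi>) powr m)"
proof -
  define P where "P = symb_seminorm \<theta> m N \<rho> * (1 + norm \<xi>) powr m"
  have b0: "norm (\<rho> \<xi> j) \<le> P" unfolding P_def using delta_bound[OF r, of 0 N \<xi> j] by simp
  have bi: "\<bar>real_of_int (j $ i)\<bar> ^ N * norm (\<rho> \<xi> j) \<le> P" for i
  proof -
    define \<alpha> where "\<alpha> = (\<chi> i'. if i' = i then N else (0::nat))"
    have "mlen \<alpha> = (\<Sum>i'\<in>UNIV. if i' = i then N else 0)" by (simp only: mlen_def \<alpha>_def vec_lambda_beta)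
    also have "\<dots> = N" by (subst sum.delta) auto
    finally have ml: "mlen \<alpha> = N" .
    have "norm (delta \<alpha> (\<rho> \<xi>) j) = \<bar>real_of_int (j $ i)\<bar> ^ N * norm (\<rho> \<xi> j)"
    proof -
      have f: "(\<lambda>i'. \<bar>real_of_int (j $ i')\<bar> ^ (\<alpha> $ i')) = (\<lambda>i'. if i' = i then \<bar>real_of_int (j $ i)\<bar> ^ N else 1)"
        by (auto simp: \<alpha>_def fun_eq_iff)
      have "(\<Prod>i'\<in>UNIV. \<bar>real_of_int (j $ i')\<bar> ^ (\<alpha> $ i')) = \<bar>real_of_int (j $ i)\<bar> ^ N"
        unfolding f by (subst prod.delta) auto
      then show ?thesis by (simp add: norm_delta)
    qed
    then show ?thesis unfolding P_def using delta_bound[OF r, of \<alpha> N \<xi> j] ml by simp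
  qed
  have P0: "P \<ge> 0" using b0 norm_ge_zero order_trans by blast
  have "(1 + knorm j) ^ N * norm (\<rho> \<xi> j)
      \<le> (real CARD('n) + 1) ^ N * (1 + (\<Sum>i\<in>UNIV. \<bar>real_of_int (j $ i)\<bar> ^ N)) * norm (\<rho> \<xi> j)"
    by (intro mult_right_mono pow_bound) auto
  also have "\<dots> = (real CARD('n) + 1) ^ N * (norm (\<rho> \<xi> j) + (\<Sum>i\<in>UNIV. \<bar>real_of_int (j $ i)\<bar> ^ N * norm (\<rho> \<xi> j)))"
  proof -
    have "(1 + (\<Sum>i\<in>UNIV. \<bar>real_of_int (j $ i)\<bar> ^ N)) * norm (\<rho> \<xi> j)
        = norm (\<rho> \<xi> j) + (\<Sum>i\<in>UNIV. \<bar>real_of_int (j $ i)\<bar> ^ N * norm (\<rho> \<xi> j))"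
      by (simp add: distrib_right sum_distrib_right)
    then show ?thesis by (simp only: mult.assoc)
  qed
  also have "\<dots> \<le> (real CARD('n) + 1) ^ N * (P + (\<Sum>i\<in>(UNIV::('n::{finite,linorder}) set). P))"
    by (intro mult_left_mono add_mono sum_mono b0 bi) auto
  also have "\<dots> = (real CARD('n) + 1) ^ (N + 1) * P"
  proof -
    have "P + (\<Sum>i\<in>(UNIV::('n::{finite,linorder}) set). P) = (real CARD('n) + 1) * P"
      by (simp add: distrib_right)
    then show ?thesis by (simp only: power_Suc2 Suc_eq_plus1[symmetric] mult.assoc)
  qed
  finally show ?thesis by (simp add: P_def)
qed

lemma coeff_decay:
  fixes \<rho> :: "real ^ ('n::{finite,linorder}) \<Rightarrow> ('n::{finite,linorder}) coeff"
  assumes r: "\<rho> \<in> symbol_class \<theta> m"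
  shows "norm (\<rho> \<xi> j) \<le> (real CARD('n) + 1) ^ (N + 1) * symb_seminorm \<theta> m N \<rho> * (1 + norm \<xi>) powr m * wt j powr (- (real N / 2))"
proof -
  define R where "R = (real CARD('n) + 1) ^ (N + 1) * symb_seminorm \<theta> m N \<rho> * (1 + norm \<xi>) powr m"
  have cb: "(1 + knorm j) ^ N * norm (\<rho> \<xi> j) \<le> R" unfolding R_def using coeff_bound[OF r, of j N \<xi>] by (simp only: mult.assoc)
  have p1: "1 + knorm j \<ge> 1" using knorm_nonneg[of j] by simp
  have "wt j powr (real N / 2) \<le> ((1 + knorm j)\<^sup>2) powr (real N / 2)"
    using wt_le_sq[of j] wt_pos[of j] by (intro powr_mono2) auto
  also have "((1 + knorm j)\<^sup>2) powr (real N / 2) = (1 + knorm j) ^ N"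
  proof -
    have e: "(1 + knorm j) powr 2 = (1 + knorm j)\<^sup>2" using p1 by simp
    have "((1 + knorm j)\<^sup>2) powr (real N / 2) = ((1 + knorm j) powr 2) powr (real N / 2)" by (simp only: e)
    also have "\<dots> = (1 + knorm j) powr (real N)" by (simp only: powr_powr) simp
    also have "\<dots> = (1 + knorm j) ^ N" using p1 by (simp add: powr_realpow)
    finally show ?thesis .
  qed
  finally have w: "wt j powr (real N / 2) \<le> (1 + knorm j) ^ N" .
  have wp: "wt j powr (real N / 2) > 0" using wt_pos[of j] by simp
  have "wt j powr (real N / 2) * norm (\<rho> \<xi> j) \<le> R"
    using cb w by (meson mult_right_mono norm_ge_zero order_trans)
  then have "norm (\<rho> \<xi> j) \<le> R / wt j powr (real N / 2)" using wp by (simp add: pos_le_divide_eq mult.commute)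
  then show ?thesis unfolding R_def by (simp only: powr_minus divide_inverse)
qed

lemma tprod_dlt: "tprod \<theta> X (dlt k) l = X (l - k) * phase \<theta> (l - k) k"
proof -
  have "(\<lambda>p. X p * dlt k (l - p) * phase \<theta> p (l - p)) = (\<lambda>p. if p = l - k then X (l - k) * phase \<theta> (l - k) k else 0)"
    by (auto simp: dlt_def fun_eq_iff)
  then show ?thesis by (simp add: tprod_def infsum_single_pt)
qed

lemma Pop_eq: "Pop \<theta> \<rho> u l = infsum (\<lambda>k. u k * \<rho> (ivec k) (l - k) * phase \<theta> (l - k) k) UNIV"
proof -
  have t: "tprod \<theta> X (\<lambda>p. if p = k then 1 else 0) l = X (l - k) * phase \<theta> (l - k) k" for X k
    using tprod_dlt[of \<theta> X k l] by (simp add: dlt_def)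
  show ?thesis by (simp add: Pop_def t mult.assoc)
qed


definition NN :: "real \<Rightarrow> nat \<Rightarrow> nat" where "NN s n = nat \<lceil>\<bar>s\<bar>\<rceil> + 2 * n"
definition KK :: "real \<Rightarrow> real \<Rightarrow> nat \<Rightarrow> real" where
  "KK s m n = (real n + 1) ^ (NN s n + 1) * 2 powr (\<bar>m\<bar>/2) * 2 powr (\<bar>s\<bar>/2)"
definition gfun :: "real \<Rightarrow> int ^ ('n::{finite,linorder}) \<Rightarrow> real" where
  "gfun s j = wt j powr ((\<bar>s\<bar> - real (NN s CARD('n))) / 2)"
definition GG :: "real \<Rightarrow> ('n::{finite,linorder}) itself \<Rightarrow> real" where
  "GG s T = infsum (gfun s :: int ^ ('n::{finite,linorder}) \<Rightarrow> real) UNIV"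

lemma KK_nonneg: "KK s m n \<ge> 0" by (simp add: KK_def)

lemma gfun_nonneg: "gfun s j \<ge> 0" by (simp add: gfun_def)

lemma gfun_summable: "(gfun s :: int ^ ('n::{finite,linorder}) \<Rightarrow> real) summable_on UNIV"
proof -
  define c where "c = (real (NN s CARD('n)) - \<bar>s\<bar>) / 2"
  have c: "c \<ge> real CARD('n)"
    unfolding c_def NN_def using real_nat_ceiling_ge[of "\<bar>s\<bar>"] by simp
  have e: "(gfun s :: int ^ ('n::{finite,linorder}) \<Rightarrow> real) = (\<lambda>j. wt j powr (- c))"
    by (simp add: fun_eq_iff gfun_def c_def minus_divide_left)
  show ?thesis unfolding e by (rule wt_powr_summable[OF c])
qed

lemma GG_nonneg: "GG s TYPE('n::{finite,linorder}) \<ge> 0"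
  unfolding GG_def by (rule infsum_nonneg) (simp add: gfun_nonneg)

lemma symb_nonneg:
  fixes \<rho> :: "real ^ ('n::{finite,linorder}) \<Rightarrow> ('n::{finite,linorder}) coeff"
  assumes r: "\<rho> \<in> symbol_class \<theta> m"
  shows "symb_seminorm \<theta> m N \<rho> \<ge> 0"
proof -
  have "sterm \<theta> m \<rho> (0, 0, 0) \<le> symb_seminorm \<theta> m N \<rho>" by (intro sterm_le[OF r]) simp
  moreover have "sterm \<theta> m \<rho> (0, 0, 0) \<ge> 0"
  proof -
    have s0: "symD \<theta> \<rho> 0 = \<rho>" using class_sf[OF r] by (simp add: smooth_family_def)
    have "cnorm \<theta> (\<rho> 0) \<ge> 0" by (intro cnorm_nonneg Asm_L1 class_Asm[OF r])
    then show ?thesis by (simp add: sterm_def s0)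
  qed
  ultimately show ?thesis by linarith
qed

lemma kernel_bound:
  fixes \<rho> :: "real ^ ('n::{finite,linorder}) \<Rightarrow> ('n::{finite,linorder}) coeff"
    and u :: "('n::{finite,linorder}) coeff"
  assumes r: "\<rho> \<in> symbol_class \<theta> m"
  shows "norm (u k * \<rho> (ivec k) (l - k) * phase \<theta> (l - k) k) * wt l powr (s/2)
    \<le> KK s m CARD('n) * symb_seminorm \<theta> m (NN s CARD('n)) \<rho> * ((wt k powr ((s + m)/2) * norm (u k)) * gfun s (l - k))"
proof -
  define N where "N = NN s CARD('n)"
  define p where "p = symb_seminorm \<theta> m N \<rho>"
  define C1 where "C1 = (real CARD('n) + 1) ^ (N + 1)"
  define wk where "wk = wt k"
  define wl where "wl = wt l"
  define w2 where "w2 = wt (l - k)"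
  have p0: "p \<ge> 0" unfolding p_def by (rule symb_nonneg[OF r])
  have C10: "C1 \<ge> 0" unfolding C1_def by simp
  have A: "norm (\<rho> (ivec k) (l - k)) \<le> C1 * p * (1 + norm (ivec k)) powr m * w2 powr (- (real N / 2))"
    unfolding C1_def p_def w2_def by (rule coeff_decay[OF r])
  have X: "(1 + norm (ivec k)) powr m \<le> 2 powr (\<bar>m\<bar>/2) * wk powr (m/2)"
    unfolding wk_def by (rule xi_powr)
  have Pe: "wl powr (s/2) \<le> 2 powr (\<bar>s\<bar>/2) * wk powr (s/2) * w2 powr (\<bar>s\<bar>/2)"
    unfolding wl_def wk_def w2_def using peetre[of l "s/2" k] by simp
  have "norm (u k * \<rho> (ivec k) (l - k) * phase \<theta> (l - k) k) * wl powr (s/2)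
      = norm (u k) * norm (\<rho> (ivec k) (l - k)) * wl powr (s/2)"
    by (simp add: norm_mult)
  also have "\<dots> \<le> norm (u k) * (C1 * p * (2 powr (\<bar>m\<bar>/2) * wk powr (m/2)) * w2 powr (- (real N / 2)))
      * (2 powr (\<bar>s\<bar>/2) * wk powr (s/2) * w2 powr (\<bar>s\<bar>/2))"
  proof (intro mult_mono mult_left_mono Pe)
    show "norm (\<rho> (ivec k) (l - k)) \<le> C1 * p * (2 powr (\<bar>m\<bar>/2) * wk powr (m/2)) * w2 powr (- (real N / 2))"
      using A X C10 p0 by (meson mult_left_mono mult_right_mono order_trans mult_nonneg_nonneg powr_ge_zero)
  qed (use C10 p0 in auto)
  also have "\<dots> = (C1 * 2 powr (\<bar>m\<bar>/2) * 2 powr (\<bar>s\<bar>/2)) * p * (norm (u k) * (wk powr (m/2) * wk powr (s/2)))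
      * (w2 powr (- (real N / 2)) * w2 powr (\<bar>s\<bar>/2))"
    by (simp only: mult_ac)
  also have "wk powr (m/2) * wk powr (s/2) = wk powr ((s + m)/2)"
    by (simp add: powr_add[symmetric] add_divide_distrib add.commute)
  also have "w2 powr (- (real N / 2)) * w2 powr (\<bar>s\<bar>/2) = w2 powr ((\<bar>s\<bar> - real N) / 2)"
    by (simp add: powr_add[symmetric] diff_divide_distrib)
  also have "C1 * 2 powr (\<bar>m\<bar>/2) * 2 powr (\<bar>s\<bar>/2) = KK s m CARD('n)"
    by (simp add: KK_def C1_def N_def)
  finally show ?thesis
    by (simp add: wl_def wk_def w2_def gfun_def N_def p_def mult_ac)
qed

lemma sob_weight_nonneg: "sob_weight s u k \<ge> 0" by (simp add: sob_weight_def)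

lemma sobnorm_sq: "(sobnorm s u)\<^sup>2 = infsum (sob_weight s u) UNIV"
proof -
  have "0 \<le> infsum (sob_weight s u) UNIV" by (rule infsum_nonneg, rule sob_weight_nonneg)
  then show ?thesis unfolding sobnorm_def by simp
qed

lemma sobnorm_nonneg: "sobnorm s u \<ge> 0"
  unfolding sobnorm_def by (rule real_sqrt_ge_zero, rule infsum_nonneg, rule sob_weight_nonneg)


lemma sob_weight_wt: "sob_weight s u k = wt k powr s * (norm (u k))\<^sup>2"
  by (simp add: sob_weight_def wt_def)

lemma pop_est:
  fixes \<rho> :: "real ^ ('n::{finite,linorder}) \<Rightarrow> ('n::{finite,linorder}) coeff"
    and u :: "('n::{finite,linorder}) coeff"
  assumes r: "\<rho> \<in> symbol_class \<theta> m" and u: "u \<in> Hsob (s + m)"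
  shows "(\<lambda>k. u k * \<rho> (ivec k) (l - k) * phase \<theta> (l - k) k) summable_on UNIV"
    and "Pop \<theta> \<rho> u \<in> Hsob s"
    and "sobnorm s (Pop \<theta> \<rho> u) \<le> KK s m CARD('n) * GG s TYPE('n) * symb_seminorm \<theta> m (NN s CARD('n)) \<rho> * sobnorm (s + m) u"
proof -
  define p where "p = symb_seminorm \<theta> m (NN s CARD('n)) \<rho>"
  define K where "K = KK s m CARD('n) * p"
  define G where "G = GG s TYPE('n)"
  define g where "g = (gfun s :: int ^ ('n::{finite,linorder}) \<Rightarrow> real)"
  define v where "v k = wt k powr ((s + m)/2) * norm (u k)" for k
  define F where "F l k = u k * \<rho> (ivec k) (l - k) * phase \<theta> (l - k) k" for l k
  define h where "h l = infsum (\<lambda>k. g (l - k) * v k) UNIV" for l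
  have p0: "p \<ge> 0" unfolding p_def by (rule symb_nonneg[OF r])
  have K0: "K \<ge> 0" unfolding K_def using p0 KK_nonneg by simp
  have G0: "G \<ge> 0" unfolding G_def by (rule GG_nonneg)
  have g0: "\<And>x. g x \<ge> 0" unfolding g_def by (rule gfun_nonneg)
  have v0: "\<And>x. v x \<ge> 0" unfolding v_def by simp
  have gs: "g summable_on UNIV" unfolding g_def by (rule gfun_summable)
  have v2: "(v k)\<^sup>2 = sob_weight (s + m) u k" for k
  proof -
    have "(wt k powr ((s + m)/2))\<^sup>2 = wt k powr (s + m)"
      by (simp add: power2_eq_square powr_add[symmetric])
    then show ?thesis unfolding v_def sob_weight_wt by (simp add: power_mult_distrib)
  qed
  have vs: "(\<lambda>x. (v x)\<^sup>2) summable_on UNIV" using u unfolding Hsob_def v2 by simp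
  have V: "infsum (\<lambda>x. (v x)\<^sup>2) UNIV = (sobnorm (s + m) u)\<^sup>2"
    unfolding v2 using sobnorm_sq[of "s + m" u] by simp
  note Y = young[of g v, OF g0 v0 gs vs]
  have kb: "norm (F l k) \<le> (wt l powr (- (s/2)) * K) * (g (l - k) * v k)" for l k
  proof -
    have "norm (F l k) * wt l powr (s/2) \<le> K * (v k * g (l - k))"
      unfolding F_def K_def p_def v_def g_def by (rule kernel_bound[OF r])
    moreover have "wt l powr (s/2) > 0" using wt_pos[of l] by simp
    ultimately have "norm (F l k) \<le> K * (v k * g (l - k)) / wt l powr (s/2)"
      by (simp add: pos_le_divide_eq)
    also have "K * (v k * g (l - k)) / wt l powr (s/2) = (wt l powr (- (s/2)) * K) * (g (l - k) * v k)"
      unfolding powr_minus divide_inverse by (simp only: mult.commute mult.left_commute mult.assoc)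
    finally show ?thesis .
  qed
  have Fs: "(\<lambda>k. norm (F l k)) summable_on UNIV" for l
    by (rule summable_on_comparison_test[OF summable_on_cmult_right[OF Y(1)]]) (auto intro: kb)
  show "(\<lambda>k. u k * \<rho> (ivec k) (l - k) * phase \<theta> (l - k) k) summable_on UNIV"
    using abs_summable_summable[OF Fs[of l]] unfolding F_def .
  have Pb: "norm (Pop \<theta> \<rho> u l) * wt l powr (s/2) \<le> K * h l" for l
  proof -
    have "norm (Pop \<theta> \<rho> u l) \<le> infsum (\<lambda>k. norm (F l k)) UNIV"
      unfolding Pop_eq F_def[symmetric] by (rule norm_infsum_bound[OF Fs])
    also have "\<dots> \<le> infsum (\<lambda>k. (wt l powr (- (s/2)) * K) * (g (l - k) * v k)) UNIV"
      by (rule infsum_mono[OF Fs summable_on_cmult_right[OF Y(1)] kb])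
    also have "\<dots> = (wt l powr (- (s/2)) * K) * h l"
      unfolding h_def by (rule infsum_cmult_right) (use Y(1) in auto)
    finally have a: "norm (Pop \<theta> \<rho> u l) \<le> (wt l powr (- (s/2)) * K) * h l" .
    have wp: "wt l powr (s/2) > 0" using wt_pos[of l] by simp
    have "norm (Pop \<theta> \<rho> u l) * wt l powr (s/2) \<le> (wt l powr (- (s/2)) * K) * h l * wt l powr (s/2)"
      using a wp by (intro mult_right_mono) auto
    also have "\<dots> = K * h l * (wt l powr (- (s/2)) * wt l powr (s/2))" by (simp only: mult_ac)
    also have "wt l powr (- (s/2)) * wt l powr (s/2) = 1" using wp by (simp add: powr_minus)
    finally show ?thesis by simp
  qed
  have sw: "sob_weight s (Pop \<theta> \<rho> u) l \<le> K\<^sup>2 * (h l)\<^sup>2" for l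
  proof -
    have h0: "h l \<ge> 0" unfolding h_def by (intro infsum_nonneg) (simp add: g0 v0)
    have "sob_weight s (Pop \<theta> \<rho> u) l = (norm (Pop \<theta> \<rho> u l) * wt l powr (s/2))\<^sup>2"
    proof -
      have "(wt l powr (s/2))\<^sup>2 = wt l powr s" by (simp add: power2_eq_square powr_add[symmetric])
      then show ?thesis by (simp add: sob_weight_wt power_mult_distrib mult.commute)
    qed
    also have "\<dots> \<le> (K * h l)\<^sup>2" using Pb[of l] by (intro power_mono) auto
    finally show ?thesis by (simp add: power_mult_distrib)
  qed
  have hs: "(\<lambda>l. (h l)\<^sup>2) summable_on UNIV" unfolding h_def by (rule Y(2))
  have ss: "sob_weight s (Pop \<theta> \<rho> u) summable_on UNIV"
    by (rule summable_on_comparison_test[OF summable_on_cmult_right[OF hs]]) (auto intro: sw sob_weight_nonneg)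
  then show "Pop \<theta> \<rho> u \<in> Hsob s" by (simp add: Hsob_def)
  have "infsum (sob_weight s (Pop \<theta> \<rho> u)) UNIV \<le> infsum (\<lambda>l. K\<^sup>2 * (h l)\<^sup>2) UNIV"
    by (rule infsum_mono[OF ss summable_on_cmult_right[OF hs] sw])
  also have "\<dots> = K\<^sup>2 * infsum (\<lambda>l. (h l)\<^sup>2) UNIV" by (rule infsum_cmult_right) (use hs in auto)
  also have "\<dots> \<le> K\<^sup>2 * (G\<^sup>2 * (sobnorm (s + m) u)\<^sup>2)"
    using Y(3) unfolding V G_def GG_def g_def h_def by (intro mult_left_mono) auto
  also have "\<dots> = (K * G * sobnorm (s + m) u)\<^sup>2" by (simp add: power_mult_distrib)
  finally have "infsum (sob_weight s (Pop \<theta> \<rho> u)) UNIV \<le> (K * G * sobnorm (s + m) u)\<^sup>2" .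
  then have "sobnorm s (Pop \<theta> \<rho> u) \<le> sqrt ((K * G * sobnorm (s + m) u)\<^sup>2)"
    unfolding sobnorm_def by (rule real_sqrt_le_mono)
  also have "\<dots> = K * G * sobnorm (s + m) u" using K0 G0 sobnorm_nonneg[of "s + m" u] by simp
  finally have fin: "sobnorm s (Pop \<theta> \<rho> u) \<le> K * G * sobnorm (s + m) u" .
  have eq: "K * G * sobnorm (s + m) u = KK s m CARD('n) * GG s TYPE('n) * symb_seminorm \<theta> m (NN s CARD('n)) \<rho> * sobnorm (s + m) u"
    unfolding K_def G_def p_def by (simp only: mult.commute mult.left_commute mult.assoc)
  show "sobnorm s (Pop \<theta> \<rho> u) \<le> KK s m CARD('n) * GG s TYPE('n) * symb_seminorm \<theta> m (NN s CARD('n)) \<rho> * sobnorm (s + m) u"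
    using fin eq by simp
qed


definition trunc :: "(int ^ ('n::{finite,linorder})) set \<Rightarrow> ('n::{finite,linorder}) coeff \<Rightarrow> ('n::{finite,linorder}) coeff" where
  "trunc F u = (\<lambda>k. if k \<in> F then u k else 0)"

lemma trunc_finite: "finite F \<Longrightarrow> finite {k. trunc F u k \<noteq> 0}"
  by (rule finite_subset[of _ F]) (auto simp: trunc_def)

lemma trunc_Asm: "finite F \<Longrightarrow> trunc F u \<in> Asm"
  by (rule Asm_finite[OF trunc_finite])

lemma trunc_Hsob: "finite F \<Longrightarrow> trunc F u \<in> Hsob s"
  unfolding Hsob_def mem_Collect_eq
  by (rule finite_nonzero_values_imp_summable_on, rule finite_subset[of _ F]) (auto simp: trunc_def sob_weight_def)

lemma coeff_le_sobnorm:
  assumes "w \<in> Hsob s"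
  shows "norm (w l) \<le> sobnorm s w * wt l powr (- (s/2))"
proof -
  have "sob_weight s w l \<le> infsum (sob_weight s w) UNIV"
    using assms unfolding Hsob_def mem_Collect_eq by (intro single_le_infsum sob_weight_nonneg)
  also have "\<dots> = (sobnorm s w)\<^sup>2" by (rule sobnorm_sq[symmetric])
  finally have a: "wt l powr s * (norm (w l))\<^sup>2 \<le> (sobnorm s w)\<^sup>2" by (simp add: sob_weight_wt)
  have e: "(wt l powr (s/2))\<^sup>2 = wt l powr s" by (simp add: power2_eq_square powr_add[symmetric])
  have "(wt l powr (s/2) * norm (w l))\<^sup>2 = wt l powr s * (norm (w l))\<^sup>2"
    by (simp only: power_mult_distrib e)
  then have "(wt l powr (s/2) * norm (w l))\<^sup>2 \<le> (sobnorm s w)\<^sup>2" using a by simp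
  then have b: "wt l powr (s/2) * norm (w l) \<le> sobnorm s w"
    by (rule power2_le_imp_le[OF _ sobnorm_nonneg])
  have wp: "wt l powr (s/2) > 0" using wt_pos[of l] by simp
  have b2: "norm (w l) * wt l powr (s/2) \<le> sobnorm s w" using b by (simp only: mult.commute)
  have "norm (w l) \<le> sobnorm s w / wt l powr (s/2)" using b2 wp by (simp only: pos_le_divide_eq)
  then show ?thesis by (simp only: powr_minus divide_inverse)
qed

lemma ext_approx:
  fixes T :: "('n::{finite,linorder}) coeff \<Rightarrow> ('n::{finite,linorder}) coeff"
  assumes T: "is_ext \<theta> \<rho> s m T" and u: "u \<in> Hsob (s + m)"
  shows "((\<lambda>F. T (trunc F u) l) \<longlongrightarrow> T u l) (finite_subsets_at_top UNIV)"
proof -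
  have maps: "\<And>w. w \<in> Hsob (s + m) \<Longrightarrow> T w \<in> Hsob s"
    and lin: "\<And>v w a b. v \<in> Hsob (s + m) \<Longrightarrow> w \<in> Hsob (s + m) \<Longrightarrow>
                T (\<lambda>k. a * v k + b * w k) = (\<lambda>k. a * T v k + b * T w k)"
    using T unfolding is_ext_def by blast+
  obtain C where C: "\<And>w. w \<in> Hsob (s + m) \<Longrightarrow> sobnorm s (T w) \<le> C * sobnorm (s + m) w"
    using T unfolding is_ext_def by blast
  define d where "d F = (\<lambda>k. 1 * u k + (-1) * trunc F u k)" for F
  define S where "S = infsum (sob_weight (s + m) u) UNIV"
  have us: "(sob_weight (s + m) u has_sum S) UNIV" using u unfolding Hsob_def S_def by simp
  have swd: "sob_weight (s + m) (d F) = (\<lambda>k. sob_weight (s + m) u k - sob_weight (s + m) (trunc F u) k)" for F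
    by (auto simp: fun_eq_iff d_def trunc_def sob_weight_def)
  have dF: "((sob_weight (s + m) (d F)) has_sum (S - sum (sob_weight (s + m) u) F)) UNIV" if F: "finite F" for F
  proof -
    have t: "(sob_weight (s + m) (trunc F u) has_sum sum (sob_weight (s + m) u) F) UNIV"
      by (rule has_sum_finite_neutralI[OF F]) (auto simp: trunc_def sob_weight_def)
    show ?thesis unfolding swd using has_sum_add[OF us has_sum_uminusI[OF t]] by simp
  qed
  have dH: "d F \<in> Hsob (s + m)" if "finite F" for F
    using dF[OF that] unfolding Hsob_def by (auto simp: has_sum_iff)
  have sn: "(sobnorm (s + m) (d F))\<^sup>2 = S - sum (sob_weight (s + m) u) F" if "finite F" for F
    unfolding sobnorm_sq using dF[OF that] by (simp add: has_sum_iff)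
  have lim0: "((\<lambda>F. S - sum (sob_weight (s + m) u) F) \<longlongrightarrow> 0) (finite_subsets_at_top UNIV)"
  proof -
    have "(sum (sob_weight (s + m) u) \<longlongrightarrow> S) (finite_subsets_at_top UNIV)"
      using us unfolding has_sum_def .
    then have "((\<lambda>F. S - sum (sob_weight (s + m) u) F) \<longlongrightarrow> S - S) (finite_subsets_at_top UNIV)"
      by (intro tendsto_diff tendsto_const)
    then show ?thesis by simp
  qed
  have limn: "((\<lambda>F. sobnorm (s + m) (d F)) \<longlongrightarrow> 0) (finite_subsets_at_top UNIV)"
  proof -
    have "((\<lambda>F. sqrt (S - sum (sob_weight (s + m) u) F)) \<longlongrightarrow> sqrt 0) (finite_subsets_at_top UNIV)"
      by (intro tendsto_real_sqrt lim0)
    moreover have "eventually (\<lambda>F. sqrt (S - sum (sob_weight (s + m) u) F) = sobnorm (s + m) (d F)) (finite_subsets_at_top UNIV)"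
    proof (rule eventually_finite_subsets_at_top_weakI)
      fix F :: "(int ^ ('n::{finite,linorder})) set" assume "finite F"
      then show "sqrt (S - sum (sob_weight (s + m) u) F) = sobnorm (s + m) (d F)"
      proof -
        have "sqrt (S - sum (sob_weight (s + m) u) F) = sqrt ((sobnorm (s + m) (d F))\<^sup>2)"
          using sn[of F] \<open>finite F\<close> by simp
        also have "\<dots> = sobnorm (s + m) (d F)" using sobnorm_nonneg[of "s + m" "d F"] by simp
        finally show ?thesis .
      qed
    qed
    ultimately show ?thesis by (simp add: tendsto_cong)
  qed
  have bound: "norm (T u l - T (trunc F u) l) \<le> (\<bar>C\<bar> * wt l powr (- (s/2))) * sobnorm (s + m) (d F)"
    if F: "finite F" for F
  proof -
    have Td: "T (d F) = (\<lambda>k. T u k - T (trunc F u) k)"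
      unfolding d_def using lin[OF u trunc_Hsob[OF F], of 1 "-1"] by simp
    have "norm (T (d F) l) \<le> sobnorm s (T (d F)) * wt l powr (- (s/2))"
      by (rule coeff_le_sobnorm[OF maps[OF dH[OF F]]])
    also have "\<dots> \<le> (\<bar>C\<bar> * sobnorm (s + m) (d F)) * wt l powr (- (s/2))"
    proof (rule mult_right_mono)
      have "sobnorm s (T (d F)) \<le> C * sobnorm (s + m) (d F)" by (rule C[OF dH[OF F]])
      also have "\<dots> \<le> \<bar>C\<bar> * sobnorm (s + m) (d F)" using sobnorm_nonneg[of "s + m" "d F"]
        by (intro mult_right_mono) auto
      finally show "sobnorm s (T (d F)) \<le> \<bar>C\<bar> * sobnorm (s + m) (d F)" .
    qed simp
    finally have "norm (T (d F) l) \<le> (\<bar>C\<bar> * sobnorm (s + m) (d F)) * wt l powr (- (s/2))" .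
    then show ?thesis unfolding Td by (simp only: mult.commute mult.left_commute mult.assoc)
  qed
  have "((\<lambda>F. T u l - T (trunc F u) l) \<longlongrightarrow> 0) (finite_subsets_at_top UNIV)"
  proof (rule Lim_null_comparison)
    show "eventually (\<lambda>F. norm (T u l - T (trunc F u) l) \<le> (\<bar>C\<bar> * wt l powr (- (s/2))) * sobnorm (s + m) (d F)) (finite_subsets_at_top UNIV)"
      by (rule eventually_finite_subsets_at_top_weakI) (rule bound)
    show "((\<lambda>F. (\<bar>C\<bar> * wt l powr (- (s/2))) * sobnorm (s + m) (d F)) \<longlongrightarrow> 0) (finite_subsets_at_top UNIV)"
      using tendsto_mult_right_zero[OF limn] by simp
  qed
  then have "((\<lambda>F. T u l - (T u l - T (trunc F u) l)) \<longlongrightarrow> T u l - 0) (finite_subsets_at_top UNIV)"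
    by (intro tendsto_diff tendsto_const)
  then show ?thesis by simp
qed

lemma ext_unique:
  fixes T T' :: "('n::{finite,linorder}) coeff \<Rightarrow> ('n::{finite,linorder}) coeff"
  assumes T: "is_ext \<theta> \<rho> s m T" and T': "is_ext \<theta> \<rho> s m T'" and u: "u \<in> Hsob (s + m)"
  shows "T' u = T u"
proof
  fix l
  have onA: "\<And>w. w \<in> Asm \<Longrightarrow> T w = Pop \<theta> \<rho> w" "\<And>w. w \<in> Asm \<Longrightarrow> T' w = Pop \<theta> \<rho> w"
    using T T' unfolding is_ext_def by blast+
  have l1: "((\<lambda>F. T (trunc F u) l) \<longlongrightarrow> T u l) (finite_subsets_at_top UNIV)" by (rule ext_approx[OF T u])
  have l2: "((\<lambda>F. T' (trunc F u) l) \<longlongrightarrow> T' u l) (finite_subsets_at_top UNIV)" by (rule ext_approx[OF T' u])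
  have "eventually (\<lambda>F. T' (trunc F u) l = T (trunc F u) l) (finite_subsets_at_top UNIV)"
    by (rule eventually_finite_subsets_at_top_weakI) (simp add: onA trunc_Asm)
  then have l3: "((\<lambda>F. T (trunc F u) l) \<longlongrightarrow> T' u l) (finite_subsets_at_top UNIV)"
    by (rule Lim_transform_eventually[OF l2])
  show "T' u l = T u l" using tendsto_unique[OF _ l3 l1] by simp
qed

lemma Pop_ext:
  fixes \<rho> :: "real ^ ('n::{finite,linorder}) \<Rightarrow> ('n::{finite,linorder}) coeff"
  assumes r: "\<rho> \<in> symbol_class \<theta> m"
  shows "is_ext \<theta> \<rho> s m (Pop \<theta> \<rho>)"
  unfolding is_ext_def
proof (intro conjI ballI allI)
  fix u :: "('n::{finite,linorder}) coeff" assume "u \<in> Hsob (s + m)"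
  then show "Pop \<theta> \<rho> u \<in> Hsob s" by (rule pop_est(2)[OF r])
next
  fix u v :: "('n::{finite,linorder}) coeff" and a b :: complex
  assume u: "u \<in> Hsob (s + m)" and v: "v \<in> Hsob (s + m)"
  show "Pop \<theta> \<rho> (\<lambda>k. a * u k + b * v k) = (\<lambda>k. a * Pop \<theta> \<rho> u k + b * Pop \<theta> \<rho> v k)"
  proof
    fix l
    have su: "(\<lambda>k. u k * \<rho> (ivec k) (l - k) * phase \<theta> (l - k) k) summable_on UNIV" by (rule pop_est(1)[OF r u])
    have sv: "(\<lambda>k. v k * \<rho> (ivec k) (l - k) * phase \<theta> (l - k) k) summable_on UNIV" by (rule pop_est(1)[OF r v])
    have "Pop \<theta> \<rho> (\<lambda>k. a * u k + b * v k) l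
       = infsum (\<lambda>k. a * (u k * \<rho> (ivec k) (l - k) * phase \<theta> (l - k) k) + b * (v k * \<rho> (ivec k) (l - k) * phase \<theta> (l - k) k)) UNIV"
      unfolding Pop_eq by (simp add: algebra_simps)
    also have "\<dots> = a * Pop \<theta> \<rho> u l + b * Pop \<theta> \<rho> v l"
      unfolding Pop_eq
      by (subst infsum_add) (auto intro!: summable_on_cmult_right su sv simp: infsum_cmult_right su sv)
    finally show "Pop \<theta> \<rho> (\<lambda>k. a * u k + b * v k) l = a * Pop \<theta> \<rho> u l + b * Pop \<theta> \<rho> v l" .
  qed
next
  show "\<exists>C. \<forall>u\<in>Hsob (s + m). sobnorm s (Pop \<theta> \<rho> u) \<le> C * sobnorm (s + m) u"
    using pop_est(3)[OF r] by blast
qed simp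


lemma L1_lin:
  assumes "L1 u" "L1 v" shows "L1 (\<lambda>k. a * u k + b * v k)"
proof -
  have "(\<lambda>k. norm a * norm (u k) + norm b * norm (v k)) summable_on UNIV"
    using assms unfolding L1_def by (intro summable_on_add summable_on_cmult_right)
  then show ?thesis unfolding L1_def
    by (rule summable_on_comparison_test) (auto intro: norm_triangle_le simp: norm_mult)
qed

lemma lim_combo:
  fixes X1 X2 :: "'a \<Rightarrow> ('n::{finite,linorder}) coeff"
  assumes L: "\<And>x. L1 (X1 x)" "\<And>x. L1 (X2 x)"
    and t1: "((\<lambda>x. cnorm \<theta> (X1 x)) \<longlongrightarrow> 0) F" and t2: "((\<lambda>x. cnorm \<theta> (X2 x)) \<longlongrightarrow> 0) F"
  shows "((\<lambda>x. cnorm \<theta> (\<lambda>k. a * X1 x k + b * X2 x k)) \<longlongrightarrow> 0) F"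
proof (rule Lim_null_comparison)
  show "eventually (\<lambda>x. norm (cnorm \<theta> (\<lambda>k. a * X1 x k + b * X2 x k)) \<le> norm a * cnorm \<theta> (X1 x) + norm b * cnorm \<theta> (X2 x)) F"
  proof (rule always_eventually, rule allI)
    fix x
    have "L1 (\<lambda>k. a * X1 x k + b * X2 x k)" by (intro L1_lin L)
    then have "cnorm \<theta> (\<lambda>k. a * X1 x k + b * X2 x k) \<ge> 0" by (rule cnorm_nonneg)
    then show "norm (cnorm \<theta> (\<lambda>k. a * X1 x k + b * X2 x k)) \<le> norm a * cnorm \<theta> (X1 x) + norm b * cnorm \<theta> (X2 x)"
      using cnorm_lin[OF L(1) L(2), where a=a and b=b and \<theta>=\<theta>] by simp
  qed
  show "((\<lambda>x. norm a * cnorm \<theta> (X1 x) + norm b * cnorm \<theta> (X2 x)) \<longlongrightarrow> 0) F"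
    using tendsto_add[OF tendsto_mult_right_zero[OF t1] tendsto_mult_right_zero[OF t2]] by simp
qed

lemma Asm_L1_delta: "u \<in> Asm \<Longrightarrow> L1 (delta \<alpha> u)"
  by (intro Asm_L1 delta_Asm)

lemma class_lin:
  fixes \<rho>1 \<rho>2 :: "real ^ ('n::{finite,linorder}) \<Rightarrow> ('n::{finite,linorder}) coeff"
  assumes r1: "\<rho>1 \<in> symbol_class \<theta> m" and r2: "\<rho>2 \<in> symbol_class \<theta> m"
  shows "(\<lambda>\<xi> k. a * \<rho>1 \<xi> k + b * \<rho>2 \<xi> k) \<in> symbol_class \<theta> m"
proof -
  obtain D1 where sf1: "smooth_family \<theta> \<rho>1 D1" and bnd1: "\<And>\<alpha> \<beta>. \<exists>C. \<forall>\<xi>. cnorm \<theta> (delta \<alpha> (D1 \<beta> \<xi>)) \<le> C * (1 + norm \<xi>) powr (m - real (mlen \<beta>))"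
    using r1 unfolding symbol_class_def by blast
  obtain D2 where sf2: "smooth_family \<theta> \<rho>2 D2" and bnd2: "\<And>\<alpha> \<beta>. \<exists>C. \<forall>\<xi>. cnorm \<theta> (delta \<alpha> (D2 \<beta> \<xi>)) \<le> C * (1 + norm \<xi>) powr (m - real (mlen \<beta>))"
    using r2 unfolding symbol_class_def by blast
  define D where "D \<beta> \<xi> k = a * D1 \<beta> \<xi> k + b * D2 \<beta> \<xi> k" for \<beta> \<xi> k
  have A1: "\<And>\<beta> \<xi>. D1 \<beta> \<xi> \<in> Asm" by (rule sf_Asm[OF sf1])
  have A2: "\<And>\<beta> \<xi>. D2 \<beta> \<xi> \<in> Asm" by (rule sf_Asm[OF sf2])
  have sf: "smooth_family \<theta> (\<lambda>\<xi> k. a * \<rho>1 \<xi> k + b * \<rho>2 \<xi> k) D"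
    unfolding smooth_family_def
  proof (intro conjI allI)
    show "D 0 = (\<lambda>\<xi> k. a * \<rho>1 \<xi> k + b * \<rho>2 \<xi> k)"
      using sf_0[OF sf1] sf_0[OF sf2] by (simp add: D_def fun_eq_iff)
  next
    fix \<beta> \<xi> show "D \<beta> \<xi> \<in> Asm" unfolding D_def by (intro Asm_lin A1 A2)
  next
    fix \<beta> \<xi> \<alpha>
    have e: "delta \<alpha> (\<lambda>k. D \<beta> \<eta> k - D \<beta> \<xi> k)
        = (\<lambda>k. a * delta \<alpha> (\<lambda>k. D1 \<beta> \<eta> k - D1 \<beta> \<xi> k) k + b * delta \<alpha> (\<lambda>k. D2 \<beta> \<eta> k - D2 \<beta> \<xi> k) k)" for \<eta>
    proof -
      have "(\<lambda>k. D \<beta> \<eta> k - D \<beta> \<xi> k) = (\<lambda>k. a * (D1 \<beta> \<eta> k - D1 \<beta> \<xi> k) + b * (D2 \<beta> \<eta> k - D2 \<beta> \<xi> k))"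
        by (simp add: D_def fun_eq_iff algebra_simps)
      then show ?thesis by (simp add: delta_lin)
    qed
    show "((\<lambda>\<eta>. cnorm \<theta> (delta \<alpha> (\<lambda>k. D \<beta> \<eta> k - D \<beta> \<xi> k))) \<longlongrightarrow> 0) (at \<xi>)"
      unfolding e
      by (rule lim_combo[OF Asm_L1_delta Asm_L1_delta sf_cont[OF sf1] sf_cont[OF sf2]])
         (intro Asm_diff A1 A2)+
  next
    fix \<beta> \<xi> \<alpha> j
    have e: "delta \<alpha> (\<lambda>k. (D \<beta> (\<xi> + h *\<^sub>R axis j 1) k - D \<beta> \<xi> k) / complex_of_real h - D (\<beta> + axis j 1) \<xi> k)
        = (\<lambda>k. a * delta \<alpha> (\<lambda>k. (D1 \<beta> (\<xi> + h *\<^sub>R axis j 1) k - D1 \<beta> \<xi> k) / complex_of_real h - D1 (\<beta> + axis j 1) \<xi> k) k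
             + b * delta \<alpha> (\<lambda>k. (D2 \<beta> (\<xi> + h *\<^sub>R axis j 1) k - D2 \<beta> \<xi> k) / complex_of_real h - D2 (\<beta> + axis j 1) \<xi> k) k)" for h
    proof -
      have "(\<lambda>k. (D \<beta> (\<xi> + h *\<^sub>R axis j 1) k - D \<beta> \<xi> k) / complex_of_real h - D (\<beta> + axis j 1) \<xi> k)
        = (\<lambda>k. a * ((D1 \<beta> (\<xi> + h *\<^sub>R axis j 1) k - D1 \<beta> \<xi> k) / complex_of_real h - D1 (\<beta> + axis j 1) \<xi> k)
             + b * ((D2 \<beta> (\<xi> + h *\<^sub>R axis j 1) k - D2 \<beta> \<xi> k) / complex_of_real h - D2 (\<beta> + axis j 1) \<xi> k))"
        by (simp add: D_def fun_eq_iff algebra_simps diff_divide_distrib add_divide_distrib)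
      then show ?thesis by (simp add: delta_lin)
    qed
    show "((\<lambda>h. cnorm \<theta> (delta \<alpha> (\<lambda>k. (D \<beta> (\<xi> + h *\<^sub>R axis j 1) k - D \<beta> \<xi> k) / complex_of_real h - D (\<beta> + axis j 1) \<xi> k))) \<longlongrightarrow> 0) (at 0)"
      unfolding e
      by (rule lim_combo[OF Asm_L1_delta Asm_L1_delta sf_deriv[OF sf1] sf_deriv[OF sf2]])
         (intro Asm_dq A1 A2)+
  qed
  have bnd: "\<exists>C. \<forall>\<xi>. cnorm \<theta> (delta \<alpha> (D \<beta> \<xi>)) \<le> C * (1 + norm \<xi>) powr (m - real (mlen \<beta>))" for \<alpha> \<beta>
  proof -
    obtain C1 where C1: "\<And>\<xi>. cnorm \<theta> (delta \<alpha> (D1 \<beta> \<xi>)) \<le> C1 * (1 + norm \<xi>) powr (m - real (mlen \<beta>))"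
      using bnd1 by blast
    obtain C2 where C2: "\<And>\<xi>. cnorm \<theta> (delta \<alpha> (D2 \<beta> \<xi>)) \<le> C2 * (1 + norm \<xi>) powr (m - real (mlen \<beta>))"
      using bnd2 by blast
    have "cnorm \<theta> (delta \<alpha> (D \<beta> \<xi>)) \<le> (norm a * C1 + norm b * C2) * (1 + norm \<xi>) powr (m - real (mlen \<beta>))" for \<xi>
    proof -
      have "delta \<alpha> (D \<beta> \<xi>) = (\<lambda>k. a * delta \<alpha> (D1 \<beta> \<xi>) k + b * delta \<alpha> (D2 \<beta> \<xi>) k)"
        unfolding D_def by (rule delta_lin)
      then have "cnorm \<theta> (delta \<alpha> (D \<beta> \<xi>)) \<le> norm a * cnorm \<theta> (delta \<alpha> (D1 \<beta> \<xi>)) + norm b * cnorm \<theta> (delta \<alpha> (D2 \<beta> \<xi>))"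
        using cnorm_lin[OF Asm_L1_delta[OF A1] Asm_L1_delta[OF A2], where a=a and b=b and \<theta>=\<theta>] by simp
      also have "\<dots> \<le> norm a * (C1 * (1 + norm \<xi>) powr (m - real (mlen \<beta>))) + norm b * (C2 * (1 + norm \<xi>) powr (m - real (mlen \<beta>)))"
        by (intro add_mono mult_left_mono C1 C2) auto
      also have "\<dots> = (norm a * C1 + norm b * C2) * (1 + norm \<xi>) powr (m - real (mlen \<beta>))"
        by (simp add: algebra_simps)
      finally show ?thesis .
    qed
    then show ?thesis by blast
  qed
  show ?thesis unfolding symbol_class_def using sf bnd by blast
qed

lemma Pop_lin_rho:
  fixes u :: "('n::{finite,linorder}) coeff"
  assumes fin: "finite {k. u k \<noteq> 0}"
  shows "Pop \<theta> (\<lambda>\<xi> k. a * P \<xi> k + b * Q \<xi> k) u l = a * Pop \<theta> P u l + b * Pop \<theta> Q u l"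
proof -
  have s: "(\<lambda>k. u k * X k) summable_on UNIV" for X :: "int ^ ('n::{finite,linorder}) \<Rightarrow> complex"
    by (rule finite_nonzero_values_imp_summable_on, rule finite_subset[OF _ fin]) auto
  have "Pop \<theta> (\<lambda>\<xi> k. a * P \<xi> k + b * Q \<xi> k) u l
      = infsum (\<lambda>k. a * (u k * (P (ivec k) (l - k) * phase \<theta> (l - k) k)) + b * (u k * (Q (ivec k) (l - k) * phase \<theta> (l - k) k))) UNIV"
    unfolding Pop_eq by (simp add: algebra_simps)
  also have "\<dots> = a * infsum (\<lambda>k. u k * (P (ivec k) (l - k) * phase \<theta> (l - k) k)) UNIV
      + b * infsum (\<lambda>k. u k * (Q (ivec k) (l - k) * phase \<theta> (l - k) k)) UNIV"
    by (subst infsum_add) (auto intro!: summable_on_cmult_right s simp: infsum_cmult_right s)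
  also have "\<dots> = a * Pop \<theta> P u l + b * Pop \<theta> Q u l"
    unfolding Pop_eq by (simp add: mult.assoc)
  finally show ?thesis .
qed

lemma ext_lin:
  fixes T T1 T2 :: "('n::{finite,linorder}) coeff \<Rightarrow> ('n::{finite,linorder}) coeff"
  assumes T1: "is_ext \<theta> \<rho>1 s m T1" and T2: "is_ext \<theta> \<rho>2 s m T2"
    and T: "is_ext \<theta> (\<lambda>\<xi> k. a * \<rho>1 \<xi> k + b * \<rho>2 \<xi> k) s m T"
    and u: "u \<in> Hsob (s + m)"
  shows "T u = (\<lambda>k. a * T1 u k + b * T2 u k)"
proof
  fix l
  have onA: "\<And>w. w \<in> Asm \<Longrightarrow> T w = Pop \<theta> (\<lambda>\<xi> k. a * \<rho>1 \<xi> k + b * \<rho>2 \<xi> k) w"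
      "\<And>w. w \<in> Asm \<Longrightarrow> T1 w = Pop \<theta> \<rho>1 w" "\<And>w. w \<in> Asm \<Longrightarrow> T2 w = Pop \<theta> \<rho>2 w"
    using T T1 T2 unfolding is_ext_def by blast+
  have l: "((\<lambda>F. T (trunc F u) l) \<longlongrightarrow> T u l) (finite_subsets_at_top UNIV)" by (rule ext_approx[OF T u])
  have l1: "((\<lambda>F. T1 (trunc F u) l) \<longlongrightarrow> T1 u l) (finite_subsets_at_top UNIV)" by (rule ext_approx[OF T1 u])
  have l2: "((\<lambda>F. T2 (trunc F u) l) \<longlongrightarrow> T2 u l) (finite_subsets_at_top UNIV)" by (rule ext_approx[OF T2 u])
  have l12: "((\<lambda>F. a * T1 (trunc F u) l + b * T2 (trunc F u) l) \<longlongrightarrow> a * T1 u l + b * T2 u l) (finite_subsets_at_top UNIV)"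
    by (intro tendsto_intros l1 l2)
  have "eventually (\<lambda>F. a * T1 (trunc F u) l + b * T2 (trunc F u) l = T (trunc F u) l) (finite_subsets_at_top UNIV)"
  proof (rule eventually_finite_subsets_at_top_weakI)
    fix F :: "(int ^ ('n::{finite,linorder})) set" assume F: "finite F"
    show "a * T1 (trunc F u) l + b * T2 (trunc F u) l = T (trunc F u) l"
      using Pop_lin_rho[OF trunc_finite[OF F], where \<theta>=\<theta> and a=a and b=b and P=\<rho>1 and Q=\<rho>2 and l=l] by (simp add: onA trunc_Asm[OF F])
  qed
  then have l3: "((\<lambda>F. T (trunc F u) l) \<longlongrightarrow> a * T1 u l + b * T2 u l) (finite_subsets_at_top UNIV)"
    by (rule Lim_transform_eventually[OF l12])
  show "T u l = a * T1 u l + b * T2 u l" using tendsto_unique[OF _ l l3] by simp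
qed

theorem proposition10p4:
  fixes \<theta> :: "real ^ ('n::{finite,linorder}) ^ ('n::{finite,linorder})" and m :: real
    and \<rho> :: "real ^ ('n::{finite,linorder}) \<Rightarrow> ('n::{finite,linorder}) coeff"
  assumes "CARD('n) \<ge> 2"
    and "antisym_mat \<theta>"
    and "\<rho> \<in> symbol_class \<theta> m"
  shows "(\<forall>s::real. \<exists>T. is_ext \<theta> \<rho> s m T \<and>
            (\<forall>T'. is_ext \<theta> \<rho> s m T' \<longrightarrow> (\<forall>u \<in> Hsob (s + m). T' u = T u)))
       \<and> (\<forall>\<rho>1 \<in> symbol_class \<theta> m. \<forall>\<rho>2 \<in> symbol_class \<theta> m. \<forall>a b :: complex.
            (\<lambda>\<xi> k. a * \<rho>1 \<xi> k + b * \<rho>2 \<xi> k) \<in> symbol_class \<theta> m \<and>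
            (\<forall>s T1 T2 T. is_ext \<theta> \<rho>1 s m T1 \<and> is_ext \<theta> \<rho>2 s m T2
                 \<and> is_ext \<theta> (\<lambda>\<xi> k. a * \<rho>1 \<xi> k + b * \<rho>2 \<xi> k) s m T \<longrightarrow>
               (\<forall>u \<in> Hsob (s + m). T u = (\<lambda>k. a * T1 u k + b * T2 u k))))
       \<and> (\<forall>s::real. \<exists>N C. \<forall>\<rho>' \<in> symbol_class \<theta> m. \<forall>T. is_ext \<theta> \<rho>' s m T \<longrightarrow>
            (\<forall>u \<in> Hsob (s + m). sobnorm s (T u) \<le> C * symb_seminorm \<theta> m N \<rho>' * sobnorm (s + m) u))"
proof (intro conjI allI ballI impI)
  fix s :: real
  show "\<exists>T. is_ext \<theta> \<rho> s m T \<and> (\<forall>T'. is_ext \<theta> \<rho> s m T' \<longrightarrow> (\<forall>u \<in> Hsob (s + m). T' u = T u))"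
    using Pop_ext[OF assms(3), of s] ext_unique by blast
next
  fix \<rho>1 \<rho>2 a b
  assume "\<rho>1 \<in> symbol_class \<theta> m" "\<rho>2 \<in> symbol_class \<theta> m"
  then show "(\<lambda>\<xi> k. a * \<rho>1 \<xi> k + b * \<rho>2 \<xi> k) \<in> symbol_class \<theta> m" by (rule class_lin)
next
  fix \<rho>1 \<rho>2 :: "real ^ ('n::{finite,linorder}) \<Rightarrow> ('n::{finite,linorder}) coeff" and a b :: complex
    and s :: real and T1 T2 T :: "('n::{finite,linorder}) coeff \<Rightarrow> ('n::{finite,linorder}) coeff"
    and u :: "('n::{finite,linorder}) coeff"
  assume "is_ext \<theta> \<rho>1 s m T1 \<and> is_ext \<theta> \<rho>2 s m T2 \<and> is_ext \<theta> (\<lambda>\<xi> k. a * \<rho>1 \<xi> k + b * \<rho>2 \<xi> k) s m T"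
    and "u \<in> Hsob (s + m)"
  then show "T u = (\<lambda>k. a * T1 u k + b * T2 u k)" using ext_lin by blast
next
  fix s :: real
  show "\<exists>N C. \<forall>\<rho>' \<in> symbol_class \<theta> m. \<forall>T. is_ext \<theta> \<rho>' s m T \<longrightarrow>
            (\<forall>u \<in> Hsob (s + m). sobnorm s (T u) \<le> C * symb_seminorm \<theta> m N \<rho>' * sobnorm (s + m) u)"
  proof (intro exI ballI allI impI)
    fix \<rho>' :: "real ^ ('n::{finite,linorder}) \<Rightarrow> ('n::{finite,linorder}) coeff"
      and T :: "('n::{finite,linorder}) coeff \<Rightarrow> ('n::{finite,linorder}) coeff"
      and u :: "('n::{finite,linorder}) coeff"
    assume r: "\<rho>' \<in> symbol_class \<theta> m" and T: "is_ext \<theta> \<rho>' s m T" and u: "u \<in> Hsob (s + m)"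
    have "T u = Pop \<theta> \<rho>' u" by (rule ext_unique[OF Pop_ext[OF r] T u])
    then show "sobnorm s (T u) \<le> (KK s m CARD('n) * GG s TYPE('n)) * symb_seminorm \<theta> m (NN s CARD('n)) \<rho>' * sobnorm (s + m) u"
      using pop_est(3)[OF r u] by simp
  qed
qed

end
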